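(* Let $\alpha>0$ and let $(u_h,\lambda_h)\in V_h\times Q_h$ satisfy $\mathcal B_h(u_h,\lambda_h;v_h,\mu_h)=\mathcal L(v_h)$ for all $(v_h,\mu_h)\in V_h\times Q_h$. Then on $\Gamma$ $$\lambda_h=\Big\{\!\!\Big\{k\frac{\partial u_h}{\partial n}\Big\}\!\!\Big\}-\beta[\![u_h]\!],$$ and $u_h$ satisfies $a_h(u_h,v_h)=\mathcal L(v_h)$ for all $v_h\in V_h$, where $a_h(w,v)=\sum_{i=1}^2(k_i\nabla w_i,\nabla v_i)_{\Omega_i}+b_h(w,v)$ with $$b_h(w,v)=\sum_{E\in\mathcal G_h^\cap}\Big\{(\beta[\![w]\!],[\![v]\!])_E-\Big(\gamma\Big[\!\!\Big[k\frac{\partial w}{\partial n}\Big]\!\!\Big],\Big[\!\!\Big[k\frac{\partial v}{\partial n}\Big]\!\!\Big]\Big)_E-\Big(\Big\{\!\!\Big\{k\frac{\partial w}{\partial n}\Big\}\!\!\Big\},[\![v]\!]\Big)_E-\Big([\![w]\!],\Big\{\!\!\Big\{k\frac{\partial v}{\partial n}\Big\}\!\!\Big\}\Big)_E\Big\}.$$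
   Context: Setting: $\Omega\subset\mathbb R^d$, $d\in\{2,3\}$, polygonal/polyhedral, split into non-overlapping polygonal/polyhedral $\Omega_1,\Omega_2$ with interface $\Gamma=\partial\Omega_1\cap\partial\Omega_2$; $k_1\ge k_2>0$ constants; $f\in L^2(\Omega)$; $n$ is the unit normal on $\Gamma$ pointing out of $\Omega_1$, $\partial w_i/\partial n=\nabla w_i\cdot n$. $V_i=\{v\in H^1(\Omega_i):v=0\text{ on }\partial\Omega_i\setminus\Gamma\}$, $Q=(H^{1/2}_{00}(\Gamma))'$ with duality pairing $\langle\cdot,\cdot\rangle$; $[\![w]\!]=(w_1-w_2)|_\Gamma$. $\mathcal B(w,\xi;v,\mu)=\sum_{i=1}^2(k_i\nabla w_i,\nabla v_i)_{\Omega_i}-\langle[\![w]\!],\mu\rangle-\langle[\![v]\!],\xi\rangle$, $\mathcal L(v)=\sum_{i=1}^2(f,v_i)_{\Omega_i}$. Each $\Omega_i$ has a simplicial mesh $\mathcal C_h^i$, $\mathcal G_h^i$ its edges/facets on $\Gamma$, $h_E=\operatorname{diam}E$; $h_i:\Gamma\to\mathbb R$ is defined by $h_i|_E=h_E$ for $E\in\mathcal G_h^i$. $\mathcal G_h^\cap$ is the mesh of all nonempty intersections $E_1\cap E_2$, $(E_1,E_2)\in\mathcal G_h^1\times\mathcal G_h^2$. For $p\ge1$: $V_{i,h}=\{v\in V_i:v|_K\in P_p(K)\ \forall K\in\mathcal C_h^i\}$, $V_h=V_{1,h}\times V_{2,h}$, $Q_h=\{\mu\in Q:\mu|_E\in P_p(E)\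 \forall E\in\mathcal G_h^\cap\}$. Method I: $\mathcal S(w,\xi;v,\mu)=\sum_{i=1}^2\sum_{E\in\mathcal G_h^i}\frac{h_E}{k_i}(\xi-k_i\frac{\partial w_i}{\partial n},\mu-k_i\frac{\partial v_i}{\partial n})_E$, $\mathcal B_h=\mathcal B-\alpha\mathcal S$. Further, $\beta=\frac{\alpha^{-1}k_1k_2}{k_2h_1+k_1h_2}$, $\gamma=\frac{\alpha h_1h_2}{k_2h_1+k_1h_2}$, $\{\!\{k\frac{\partial w}{\partial n}\}\!\}=\frac{k_2h_1}{k_2h_1+k_1h_2}k_1\frac{\partial w_1}{\partial n}+\frac{k_1h_2}{k_2h_1+k_1h_2}k_2\frac{\partial w_2}{\partial n}$, and $[\![k\frac{\partial w}{\partial n}]\!]=k_1\frac{\partial w_1}{\partial n}-k_2\frac{\partial w_2}{\partial n}$. *)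

theory Defs
  imports "HOL-Analysis.Analysis"
begin

type_synonym 'd pt = "real^'d"

definition poly_fun :: "nat \<Rightarrow> ('d::finite pt \<Rightarrow> real) \<Rightarrow> bool" where
  "poly_fun p q \<longleftrightarrow> (\<exists>c :: ('d \<Rightarrow> nat) \<Rightarrow> real.
      q = (\<lambda>x. \<Sum>a\<in>{a::'d \<Rightarrow> nat. sum a UNIV \<le> p}. c a * (\<Prod>i\<in>UNIV. (x $ i) ^ a i)))"

definition conforming_mesh :: "'d::finite pt set set \<Rightarrow> bool" where
  "conforming_mesh C \<longleftrightarrow> finite C \<and> C \<noteq> {} \<and>
     (\<forall>K\<in>C. int CARD('d) simplex K) \<and>
     (\<forall>K\<in>C. \<forall>K'\<in>C. (K \<inter> K') face_of K \<and> (K \<inter> K') face_of K')"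

definition mesh_domain :: "'d::finite pt set set \<Rightarrow> 'd pt set" where
  "mesh_domain C = interior (\<Union>C)"

definition iface_facets :: "'d::finite pt set set \<Rightarrow> 'd pt set \<Rightarrow> 'd pt set set" where
  "iface_facets C \<Gamma> = {E. (\<exists>K\<in>C. E face_of K) \<and> (int CARD('d) - 1) simplex E \<and> E \<subseteq> \<Gamma>}"

text \<open>G_h^cap, indexed by the pairs (E1,E2) producing it; only intersections of
  positive (d-1)-dimensional measure are kept (the others are null sets of Gamma).\<close>
definition inter_mesh :: "'d::finite pt set set \<Rightarrow> 'd pt set set \<Rightarrow> ('d pt set \<times> 'd pt set) set" where
  "inter_mesh G1 G2 = {(E1, E2). E1 \<in> G1 \<and> E2 \<in> G2 \<and> aff_dim (E1 \<inter> E2) = int CARD('d) - 1}"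

definition Vh :: "nat \<Rightarrow> 'd::finite pt set set \<Rightarrow> 'd pt set \<Rightarrow> ('d pt \<Rightarrow> real) set" where
  "Vh p C \<Gamma> = {v. continuous_on (\<Union>C) v \<and>
       (\<forall>K\<in>C. \<exists>q. poly_fun p q \<and> (\<forall>x\<in>K. v x = q x)) \<and>
       (\<forall>x\<in>frontier (mesh_domain C) - \<Gamma>. v x = 0)}"

text \<open>Q_h: piecewise polynomials of degree p on the intersection mesh (as L^2 functions:
  prescribed on the relative interiors of the elements).\<close>
definition Qh :: "nat \<Rightarrow> 'd::finite pt set set \<Rightarrow> 'd pt set set \<Rightarrow> ('d pt \<Rightarrow> real) set" where
  "Qh p G1 G2 = {\<mu>. \<forall>(E1, E2)\<in>inter_mesh G1 G2.
       \<exists>q. poly_fun p q \<and> (\<forall>x\<in>rel_interior (E1 \<inter> E2). \<mu> x = q x)}"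

definition grad :: "('d::finite pt \<Rightarrow> real) \<Rightarrow> 'd pt \<Rightarrow> 'd pt" where
  "grad f x = (\<chi> j. frechet_derivative f (at x) (axis j 1))"

text \<open>Surface integral over a flat (d-1)-dimensional set E: integrate the normal-constant
  extension of g over the slab of unit thickness above E (exact by Fubini).\<close>
definition facet_integral :: "'d::finite pt set \<Rightarrow> ('d pt \<Rightarrow> real) \<Rightarrow> real" where
  "facet_integral E g =
     integral {x. closest_point (affine hull E) x \<in> E \<and> infdist x (affine hull E) \<le> 1/2}
       (\<lambda>x. g (closest_point (affine hull E) x))"

definition iface_int :: "'d::finite pt set set \<Rightarrow> 'd pt set set \<Rightarrow> ('d pt \<Rightarrow> real) \<Rightarrow> real" where
  "iface_int G1 G2 g = (\<Sum>(E1, E2)\<in>inter_mesh G1 G2. facet_integral (E1 \<inter> E2) g)"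

text \<open>Normal derivatives (n points out of Omega_1): one-sided from inside Omega_1 for w_1,
  from inside Omega_2 for w_2.\<close>
definition nderiv1 :: "('d::finite pt \<Rightarrow> 'd pt) \<Rightarrow> ('d pt \<Rightarrow> real) \<Rightarrow> 'd pt \<Rightarrow> real" where
  "nderiv1 n w x = Lim (at_right 0) (\<lambda>t. (w x - w (x - t *\<^sub>R n x)) / t)"

definition nderiv2 :: "('d::finite pt \<Rightarrow> 'd pt) \<Rightarrow> ('d pt \<Rightarrow> real) \<Rightarrow> 'd pt \<Rightarrow> real" where
  "nderiv2 n w x = Lim (at_right 0) (\<lambda>t. (w (x + t *\<^sub>R n x) - w x) / t)"

definition is_iface_normal ::
  "'d::finite pt set set \<Rightarrow> 'd pt set set \<Rightarrow> 'd pt set \<Rightarrow> ('d pt \<Rightarrow> 'd pt) \<Rightarrow> bool" where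
  "is_iface_normal C1 C2 \<Gamma> n \<longleftrightarrow>
     (\<forall>E\<in>iface_facets C1 \<Gamma> \<union> iface_facets C2 \<Gamma>. \<forall>x\<in>rel_interior E.
        norm (n x) = 1 \<and> (\<forall>y\<in>E. \<forall>z\<in>E. n x \<bullet> (y - z) = 0)) \<and>
     (\<forall>E\<in>iface_facets C1 \<Gamma>. \<forall>x\<in>rel_interior E.
        eventually (\<lambda>t. x - t *\<^sub>R n x \<in> mesh_domain C1) (at_right 0)) \<and>
     (\<forall>E\<in>iface_facets C2 \<Gamma>. \<forall>x\<in>rel_interior E.
        eventually (\<lambda>t. x + t *\<^sub>R n x \<in> mesh_domain C2) (at_right 0))"

definition Bform ::
  "'d::finite pt set set \<Rightarrow> 'd pt set set \<Rightarrow> 'd pt set \<Rightarrow> real \<Rightarrow> real \<Rightarrow>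
   ('d pt \<Rightarrow> real) \<Rightarrow> ('d pt \<Rightarrow> real) \<Rightarrow> ('d pt \<Rightarrow> real) \<Rightarrow>
   ('d pt \<Rightarrow> real) \<Rightarrow> ('d pt \<Rightarrow> real) \<Rightarrow> ('d pt \<Rightarrow> real) \<Rightarrow> real" where
  "Bform C1 C2 \<Gamma> k1 k2 w1 w2 \<xi> v1 v2 \<mu> =
     k1 * integral (mesh_domain C1) (\<lambda>x. grad w1 x \<bullet> grad v1 x)
   + k2 * integral (mesh_domain C2) (\<lambda>x. grad w2 x \<bullet> grad v2 x)
   - iface_int (iface_facets C1 \<Gamma>) (iface_facets C2 \<Gamma>) (\<lambda>x. (w1 x - w2 x) * \<mu> x)
   - iface_int (iface_facets C1 \<Gamma>) (iface_facets C2 \<Gamma>) (\<lambda>x. (v1 x - v2 x) * \<xi> x)"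

definition Sform ::
  "('d::finite pt \<Rightarrow> 'd pt) \<Rightarrow> 'd pt set set \<Rightarrow> 'd pt set set \<Rightarrow> 'd pt set \<Rightarrow> real \<Rightarrow> real \<Rightarrow>
   ('d pt \<Rightarrow> real) \<Rightarrow> ('d pt \<Rightarrow> real) \<Rightarrow> ('d pt \<Rightarrow> real) \<Rightarrow>
   ('d pt \<Rightarrow> real) \<Rightarrow> ('d pt \<Rightarrow> real) \<Rightarrow> ('d pt \<Rightarrow> real) \<Rightarrow> real" where
  "Sform n C1 C2 \<Gamma> k1 k2 w1 w2 \<xi> v1 v2 \<mu> =
     (\<Sum>E\<in>iface_facets C1 \<Gamma>. diameter E / k1 *
        facet_integral E (\<lambda>x. (\<xi> x - k1 * nderiv1 n w1 x) * (\<mu> x - k1 * nderiv1 n v1 x)))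
   + (\<Sum>E\<in>iface_facets C2 \<Gamma>. diameter E / k2 *
        facet_integral E (\<lambda>x. (\<xi> x - k2 * nderiv2 n w2 x) * (\<mu> x - k2 * nderiv2 n v2 x)))"

definition Bh_form ::
  "real \<Rightarrow> ('d::finite pt \<Rightarrow> 'd pt) \<Rightarrow> 'd pt set set \<Rightarrow> 'd pt set set \<Rightarrow> 'd pt set \<Rightarrow> real \<Rightarrow> real \<Rightarrow>
   ('d pt \<Rightarrow> real) \<Rightarrow> ('d pt \<Rightarrow> real) \<Rightarrow> ('d pt \<Rightarrow> real) \<Rightarrow>
   ('d pt \<Rightarrow> real) \<Rightarrow> ('d pt \<Rightarrow> real) \<Rightarrow> ('d pt \<Rightarrow> real) \<Rightarrow> real" where
  "Bh_form \<alpha> n C1 C2 \<Gamma> k1 k2 w1 w2 \<xi> v1 v2 \<mu> =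
     Bform C1 C2 \<Gamma> k1 k2 w1 w2 \<xi> v1 v2 \<mu> - \<alpha> * Sform n C1 C2 \<Gamma> k1 k2 w1 w2 \<xi> v1 v2 \<mu>"

definition Lform :: "'d::finite pt set set \<Rightarrow> 'd pt set set \<Rightarrow> ('d pt \<Rightarrow> real) \<Rightarrow>
   ('d pt \<Rightarrow> real) \<Rightarrow> ('d pt \<Rightarrow> real) \<Rightarrow> real" where
  "Lform C1 C2 f v1 v2 =
     integral (mesh_domain C1) (\<lambda>x. f x * v1 x) + integral (mesh_domain C2) (\<lambda>x. f x * v2 x)"

text \<open>beta, gamma and the weighted flux average / flux jump, with h1 = h_{E1}, h2 = h_{E2}
  on the intersection element E1 \<inter> E2.\<close>
definition beta_w :: "real \<Rightarrow> real \<Rightarrow> real \<Rightarrow> real \<Rightarrow> real \<Rightarrow> real" where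
  "beta_w \<alpha> k1 k2 h1 h2 = inverse \<alpha> * k1 * k2 / (k2 * h1 + k1 * h2)"

definition gamma_w :: "real \<Rightarrow> real \<Rightarrow> real \<Rightarrow> real \<Rightarrow> real \<Rightarrow> real" where
  "gamma_w \<alpha> k1 k2 h1 h2 = \<alpha> * h1 * h2 / (k2 * h1 + k1 * h2)"

definition flux_avg :: "('d::finite pt \<Rightarrow> 'd pt) \<Rightarrow> real \<Rightarrow> real \<Rightarrow> real \<Rightarrow> real \<Rightarrow>
   ('d pt \<Rightarrow> real) \<Rightarrow> ('d pt \<Rightarrow> real) \<Rightarrow> 'd pt \<Rightarrow> real" where
  "flux_avg n k1 k2 h1 h2 w1 w2 x =
     k2 * h1 / (k2 * h1 + k1 * h2) * (k1 * nderiv1 n w1 x)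
   + k1 * h2 / (k2 * h1 + k1 * h2) * (k2 * nderiv2 n w2 x)"

definition flux_jump :: "('d::finite pt \<Rightarrow> 'd pt) \<Rightarrow> real \<Rightarrow> real \<Rightarrow>
   ('d pt \<Rightarrow> real) \<Rightarrow> ('d pt \<Rightarrow> real) \<Rightarrow> 'd pt \<Rightarrow> real" where
  "flux_jump n k1 k2 w1 w2 x = k1 * nderiv1 n w1 x - k2 * nderiv2 n w2 x"

definition bh_form ::
  "real \<Rightarrow> ('d::finite pt \<Rightarrow> 'd pt) \<Rightarrow> 'd pt set set \<Rightarrow> 'd pt set set \<Rightarrow> 'd pt set \<Rightarrow> real \<Rightarrow> real \<Rightarrow>
   ('d pt \<Rightarrow> real) \<Rightarrow> ('d pt \<Rightarrow> real) \<Rightarrow> ('d pt \<Rightarrow> real) \<Rightarrow> ('d pt \<Rightarrow> real) \<Rightarrow> real" where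
  "bh_form \<alpha> n C1 C2 \<Gamma> k1 k2 w1 w2 v1 v2 =
     (\<Sum>(E1, E2)\<in>inter_mesh (iface_facets C1 \<Gamma>) (iface_facets C2 \<Gamma>).
        let h1 = diameter E1; h2 = diameter E2; E = E1 \<inter> E2 in
          facet_integral E (\<lambda>x. beta_w \<alpha> k1 k2 h1 h2 * (w1 x - w2 x) * (v1 x - v2 x))
        - facet_integral E (\<lambda>x. gamma_w \<alpha> k1 k2 h1 h2 * flux_jump n k1 k2 w1 w2 x * flux_jump n k1 k2 v1 v2 x)
        - facet_integral E (\<lambda>x. flux_avg n k1 k2 h1 h2 w1 w2 x * (v1 x - v2 x))
        - facet_integral E (\<lambda>x. (w1 x - w2 x) * flux_avg n k1 k2 h1 h2 v1 v2 x))"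

definition ah_form ::
  "real \<Rightarrow> ('d::finite pt \<Rightarrow> 'd pt) \<Rightarrow> 'd pt set set \<Rightarrow> 'd pt set set \<Rightarrow> 'd pt set \<Rightarrow> real \<Rightarrow> real \<Rightarrow>
   ('d pt \<Rightarrow> real) \<Rightarrow> ('d pt \<Rightarrow> real) \<Rightarrow> ('d pt \<Rightarrow> real) \<Rightarrow> ('d pt \<Rightarrow> real) \<Rightarrow> real" where
  "ah_form \<alpha> n C1 C2 \<Gamma> k1 k2 w1 w2 v1 v2 =
     k1 * integral (mesh_domain C1) (\<lambda>x. grad w1 x \<bullet> grad v1 x)
   + k2 * integral (mesh_domain C2) (\<lambda>x. grad w2 x \<bullet> grad v2 x)
   + bh_form \<alpha> n C1 C2 \<Gamma> k1 k2 w1 w2 v1 v2"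

end

theory Submission
  imports Defs
begin


definition MI :: "nat \<Rightarrow> ('d::finite \<Rightarrow> nat) set" where
  "MI p = {a. sum a UNIV \<le> p}"

definition mnm :: "('d::finite \<Rightarrow> nat) \<Rightarrow> 'd pt \<Rightarrow> real" where
  "mnm a x = (\<Prod>i\<in>UNIV. (x $ i) ^ a i)"

lemma finite_MI: "finite (MI p :: ('d::finite \<Rightarrow> nat) set)"
proof -
  have "MI p \<subseteq> PiE (UNIV::'d set) (\<lambda>_. {..p})"
  proof
    fix a :: "'d \<Rightarrow> nat" assume "a \<in> MI p"
    then have "sum a UNIV \<le> p" by (simp add: MI_def)
    moreover have "a i \<le> sum a UNIV" for i
      by (rule member_le_sum) auto
    ultimately show "a \<in> PiE UNIV (\<lambda>_. {..p})"
      by (auto simp: PiE_def extensional_def intro: order_trans)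
  qed
  then show ?thesis by (rule finite_subset) (auto intro: finite_PiE)
qed

lemma poly_fun_iff: "poly_fun p q \<longleftrightarrow> (\<exists>c. q = (\<lambda>x. \<Sum>a\<in>MI p. c a * mnm a x))"
  by (simp add: poly_fun_def MI_def mnm_def)

lemma poly_fun_add:
  assumes "poly_fun p f" "poly_fun p g" shows "poly_fun p (\<lambda>x. f x + g x)"
proof -
  obtain c1 c2 where "f = (\<lambda>x. \<Sum>a\<in>MI p. c1 a * mnm a x)" "g = (\<lambda>x. \<Sum>a\<in>MI p. c2 a * mnm a x)"
    using assms by (auto simp: poly_fun_iff)
  then show ?thesis unfolding poly_fun_iff
    by (intro exI[of _ "\<lambda>a. c1 a + c2 a"]) (auto simp: sum.distrib distrib_right)
qed

lemma poly_fun_scale: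
  assumes "poly_fun p f" shows "poly_fun p (\<lambda>x. r * f x)"
proof -
  obtain c1 where "f = (\<lambda>x. \<Sum>a\<in>MI p. c1 a * mnm a x)"
    using assms by (auto simp: poly_fun_iff)
  then show ?thesis unfolding poly_fun_iff
    by (intro exI[of _ "\<lambda>a. r * c1 a"]) (auto simp: sum_distrib_left mult.assoc)
qed

lemma poly_fun_zero: "poly_fun p (\<lambda>x. 0)"
  unfolding poly_fun_iff by (intro exI[of _ "\<lambda>a. 0"]) simp

lemma poly_fun_sum:
  assumes "finite I" "\<And>i. i \<in> I \<Longrightarrow> poly_fun p (f i)"
  shows "poly_fun p (\<lambda>x. \<Sum>i\<in>I. f i x)"
  using assms by (induction I rule: finite_induct) (auto intro: poly_fun_add poly_fun_zero)

lemma poly_fun_mnm: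
  assumes "b \<in> MI p" shows "poly_fun p (mnm b)"
  unfolding poly_fun_iff
proof (intro exI[of _ "\<lambda>a. if a = b then 1 else 0"] ext)
  fix x
  have "(\<Sum>a\<in>MI p. (if a = b then 1 else 0) * mnm a x) = (\<Sum>a\<in>MI p. if a = b then mnm a x else 0)"
    by (rule sum.cong) auto
  also have "\<dots> = mnm b x" using assms finite_MI[of p] by (subst sum.remove[of _ b]) auto
  finally show "mnm b x = (\<Sum>a\<in>MI p. (if a = b then 1 else 0) * mnm a x)" by simp
qed

lemma poly_fun_const: "poly_fun p (\<lambda>x. r)"
proof -
  have "(\<lambda>_. 0) \<in> MI p" by (simp add: MI_def)
  then have "poly_fun p (mnm (\<lambda>_. 0))" by (rule poly_fun_mnm)
  then have "poly_fun p (\<lambda>x. r * mnm (\<lambda>_. 0) x)" by (rule poly_fun_scale)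
  then show ?thesis by (simp add: mnm_def)
qed

lemma poly_fun_diff:
  assumes "poly_fun p f" "poly_fun p g" shows "poly_fun p (\<lambda>x. f x - g x)"
  using poly_fun_add[OF assms(1) poly_fun_scale[OF assms(2), of "-1"]] by simp

lemma poly_fun_cont:
  assumes "poly_fun p f" shows "continuous_on S f"
proof -
  obtain c1 where "f = (\<lambda>x. \<Sum>a\<in>MI p. c1 a * mnm a x)"
    using assms by (auto simp: poly_fun_iff)
  then show ?thesis unfolding mnm_def
    by (auto intro!: continuous_intros)
qed

lemma mnm_deriv:
  fixes x N :: "'d::finite pt"
  shows "((\<lambda>s. mnm a (x + s *\<^sub>R N)) has_field_derivative
     (\<Sum>i\<in>UNIV. (real (a i) * N $ i) * mnm (a(i := a i - 1)) x)) (at 0)"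
proof -
  have d: "((\<lambda>s. (x $ i + s * N $ i) ^ a i) has_field_derivative
          real (a i) * (x $ i) ^ (a i - 1) * N $ i) (at 0)" for i
    by (auto intro!: derivative_eq_intros)
  have "((\<lambda>s. \<Prod>i\<in>UNIV. (x $ i + s * N $ i) ^ a i) has_field_derivative
     (\<Sum>i\<in>UNIV. real (a i) * (x $ i) ^ (a i - 1) * N $ i * (\<Prod>j\<in>UNIV-{i}. (x $ j + 0 * N $ j) ^ a j))) (at 0)"
    by (rule has_field_derivative_prod) (rule d)
  moreover have "(\<Sum>i\<in>UNIV. real (a i) * (x $ i) ^ (a i - 1) * N $ i * (\<Prod>j\<in>UNIV-{i}. (x $ j + 0 * N $ j) ^ a j))
      = (\<Sum>i\<in>UNIV. (real (a i) * N $ i) * mnm (a(i := a i - 1)) x)"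
  proof (rule sum.cong[OF refl])
    fix i :: 'd
    have "mnm (a(i := a i - 1)) x = (x $ i) ^ (a i - 1) * (\<Prod>j\<in>UNIV-{i}. (x $ j) ^ (a(i := a i - 1)) j)"
      unfolding mnm_def by (subst prod.remove[of UNIV i]) auto
    also have "(\<Prod>j\<in>UNIV-{i}. (x $ j) ^ (a(i := a i - 1)) j) = (\<Prod>j\<in>UNIV-{i}. (x $ j) ^ a j)"
      by (rule prod.cong) auto
    finally have eq: "mnm (a(i := a i - 1)) x = (x $ i) ^ (a i - 1) * (\<Prod>j\<in>UNIV-{i}. (x $ j) ^ a j)" .
    show "real (a i) * (x $ i) ^ (a i - 1) * N $ i * (\<Prod>j\<in>UNIV-{i}. (x $ j + 0 * N $ j) ^ a j)
      = (real (a i) * N $ i) * mnm (a(i := a i - 1)) x" unfolding eq by simp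
  qed
  moreover have "(\<lambda>s. mnm a (x + s *\<^sub>R N)) = (\<lambda>s. \<Prod>i\<in>UNIV. (x $ i + s * N $ i) ^ a i)"
    by (simp add: mnm_def)
  ultimately show ?thesis by simp
qed

lemma MI_dec: "a \<in> MI p \<Longrightarrow> a(i := a i - 1) \<in> MI p"
  unfolding MI_def
proof -
  assume "a \<in> {a. sum a UNIV \<le> p}"
  moreover have "sum (a(i := a i - 1)) UNIV \<le> sum a UNIV" by (rule sum_mono) auto
  ultimately show "a(i := a i - 1) \<in> {a. sum a UNIV \<le> p}" by auto
qed

lemma poly_fun_deriv:
  fixes N :: "'d::finite pt"
  assumes "poly_fun p q"
  shows "\<exists>q'. poly_fun p q' \<and> (\<forall>x. ((\<lambda>s. q (x + s *\<^sub>R N)) has_field_derivative q' x) (at 0))"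
proof -
  obtain c where c: "q = (\<lambda>x. \<Sum>a\<in>MI p. c a * mnm a x)"
    using assms by (auto simp: poly_fun_iff)
  define q' where "q' = (\<lambda>x. \<Sum>a\<in>MI p. c a * (\<Sum>i\<in>UNIV. (real (a i) * N $ i) * mnm (a(i := a i - 1)) x))"
  have "poly_fun p q'"
    unfolding q'_def
    by (intro poly_fun_sum poly_fun_scale finite_MI poly_fun_mnm MI_dec) auto
  moreover have "((\<lambda>s. q (x + s *\<^sub>R N)) has_field_derivative q' x) (at 0)" for x
    unfolding c q'_def
    by (intro DERIV_sum DERIV_cmult mnm_deriv)
  ultimately show ?thesis by blast
qed




lemma facet_props:
  fixes C :: "'d::finite pt set set"
  assumes "conforming_mesh C" "E \<in> iface_facets C \<Gamma>"
  shows "\<exists>K\<in>C. E face_of K \<and> int CARD('d) simplex K"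
    and "(int CARD('d) - 1) simplex E" and "E \<subseteq> \<Gamma>"
    and "compact E" "convex E" "aff_dim E = int CARD('d) - 1" "E \<noteq> {}" "polytope E"
proof -
  from assms(2) obtain K where K: "K \<in> C" "E face_of K" and S: "(int CARD('d) - 1) simplex E" and G: "E \<subseteq> \<Gamma>"
    unfolding iface_facets_def by auto
  moreover have "int CARD('d) simplex K" using assms(1) K(1) unfolding conforming_mesh_def by auto
  ultimately show "\<exists>K\<in>C. E face_of K \<and> int CARD('d) simplex K" by blast
  show "(int CARD('d) - 1) simplex E" "E \<subseteq> \<Gamma>" by fact+
  show "compact E" by (rule compact_simplex[OF S])
  show "convex E" by (rule convex_simplex[OF S])
  show ad: "aff_dim E = int CARD('d) - 1" by (rule aff_dim_simplex[OF S])
  show "E \<noteq> {}"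
  proof
    assume "E = {}"
    then have "aff_dim E = -1" by simp
    moreover have "CARD('d) > 0" by simp
    ultimately show False using ad by simp
  qed
  show "polytope E" by (rule simplex_imp_polytope[OF S])
qed

lemma facets_distinct:
  fixes C :: "'d::finite pt set set"
  assumes mesh: "conforming_mesh C" and E: "E \<in> iface_facets C \<Gamma>" and E': "E' \<in> iface_facets C \<Gamma>"
    and ne: "E \<noteq> E'"
  shows "E' \<inter> rel_interior E = {}"
proof (rule ccontr)
  assume nz: "E' \<inter> rel_interior E \<noteq> {}"
  obtain K where K: "K \<in> C" "E face_of K" using facet_props(1)[OF mesh E] by blast
  obtain K' where K': "K' \<in> C" "E' face_of K'" using facet_props(1)[OF mesh E'] by blast
  have KK: "(K \<inter> K') face_of K" "(K \<inter> K') face_of K'"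
    using mesh K(1) K'(1) unfolding conforming_mesh_def by auto
  have E'sub: "E' \<subseteq> K'" using K'(2) face_of_imp_subset by blast
  have Esub: "E \<subseteq> K" using K(2) face_of_imp_subset by blast
  define T where "T = E' \<inter> (K \<inter> K')"
  have T1: "T face_of K'" unfolding T_def by (rule face_of_Int[OF K'(2) KK(2)])
  have T2: "T face_of (K \<inter> K')" by (rule face_of_subset[OF T1]) (auto simp: T_def)
  have T3: "T face_of K" by (rule face_of_trans[OF T2 KK(1)])
  have "T \<inter> rel_interior E \<noteq> {}"
    using nz rel_interior_subset[of E] Esub E'sub by (auto simp: T_def)
  then have ET: "E \<subseteq> T" by (rule subset_of_face_of[OF T3 Esub])
  then have "E face_of T" using face_of_subset[OF K(2)] T3 face_of_imp_subset by blast
  moreover have "T face_of E'" by (rule face_of_subset[OF T1]) (auto simp: T_def E'sub)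
  ultimately have "E face_of E'" by (rule face_of_trans)
  then have "aff_dim E < aff_dim E'"
    using face_of_aff_dim_lt[of E' E] facet_props(5)[OF mesh E'] ne by auto
  then show False using facet_props(6)[OF mesh E] facet_props(6)[OF mesh E'] by simp
qed

lemma piece_props:
  fixes C1 C2 :: "'d::finite pt set set"
  assumes mesh1: "conforming_mesh C1" and mesh2: "conforming_mesh C2"
    and EE: "(E1, E2) \<in> inter_mesh (iface_facets C1 \<Gamma>) (iface_facets C2 \<Gamma>)"
  shows "E1 \<in> iface_facets C1 \<Gamma>" "E2 \<in> iface_facets C2 \<Gamma>"
    "aff_dim (E1 \<inter> E2) = int CARD('d) - 1"
    "affine hull (E1 \<inter> E2) = affine hull E1" "affine hull (E1 \<inter> E2) = affine hull E2"
    "rel_interior (E1 \<inter> E2) \<subseteq> rel_interior E1" "rel_interior (E1 \<inter> E2) \<subseteq> rel_interior E2"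
    "rel_interior (E1 \<inter> E2) \<noteq> {}"
proof -
  show E1: "E1 \<in> iface_facets C1 \<Gamma>" and E2: "E2 \<in> iface_facets C2 \<Gamma>"
    and ad: "aff_dim (E1 \<inter> E2) = int CARD('d) - 1"
    using EE by (auto simp: inter_mesh_def)
  show h1: "affine hull (E1 \<inter> E2) = affine hull E1"
    using aff_dim_eq_full_gen[of "E1 \<inter> E2" E1] ad facet_props(6)[OF mesh1 E1] by auto
  show h2: "affine hull (E1 \<inter> E2) = affine hull E2"
    using aff_dim_eq_full_gen[of "E1 \<inter> E2" E2] ad facet_props(6)[OF mesh2 E2] by auto
  show "rel_interior (E1 \<inter> E2) \<subseteq> rel_interior E1" by (rule rel_interior_mono) (use h1 in auto)
  show "rel_interior (E1 \<inter> E2) \<subseteq> rel_interior E2" by (rule rel_interior_mono) (use h2 in auto)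
  have cv: "convex (E1 \<inter> E2)" using facet_props(5)[OF mesh1 E1] facet_props(5)[OF mesh2 E2] by (rule convex_Int)
  have "E1 \<inter> E2 \<noteq> {}"
  proof
    assume "E1 \<inter> E2 = {}"
    then have "aff_dim (E1 \<inter> E2) = -1" by simp
    moreover have "CARD('d) > 0" by simp
    ultimately show False using ad by simp
  qed
  then show "rel_interior (E1 \<inter> E2) \<noteq> {}" using rel_interior_eq_empty[OF cv] by simp
qed

lemma side_interior:
  fixes K E :: "'d::finite pt set" and a :: "'d pt"
  assumes cK: "convex K" and iK: "interior K \<noteq> {}" and EK: "E \<subseteq> K" and Ka: "K \<subseteq> {y. a \<bullet> y \<le> b}"
    and hE: "affine hull E = {y. a \<bullet> y = b}" and a0: "a \<noteq> 0" and x: "x \<in> rel_interior E"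
  shows "eventually (\<lambda>t. x - t *\<^sub>R a \<in> interior K) (at_right 0)"
proof -
  obtain y0 where y0: "y0 \<in> interior K" using iK by auto
  have aa: "a \<bullet> a > 0" using a0 by simp
  have "a \<bullet> y0 < b"
  proof (rule ccontr)
    assume "\<not> a \<bullet> y0 < b"
    moreover have "a \<bullet> y0 \<le> b" using y0 interior_subset Ka by auto
    ultimately have eq: "a \<bullet> y0 = b" by simp
    obtain e where e: "e > 0" "ball y0 e \<subseteq> K" using y0 by (auto simp: mem_interior)
    define z where "z = y0 + (e / (2 * norm a)) *\<^sub>R a"
    have "dist y0 z = e / 2" using e a0 by (simp add: z_def dist_norm)
    then have "z \<in> ball y0 e" using e by simp
    then have "a \<bullet> z \<le> b" using e Ka by auto
    moreover have "a \<bullet> z = b + (e / (2 * norm a)) * (a \<bullet> a)" by (simp add: z_def inner_add_right eq)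
    moreover have "(e / (2 * norm a)) * (a \<bullet> a) > 0" using e a0 aa by simp
    ultimately show False by simp
  qed
  define c where "c = b - a \<bullet> y0"
  have c: "c > 0" using \<open>a \<bullet> y0 < b\<close> by (simp add: c_def)
  have xE: "x \<in> E" using x rel_interior_subset by blast
  have ax: "a \<bullet> x = b" using hull_inc[OF xE, of affine] hE by auto
  obtain r where r: "r > 0" "ball x r \<inter> affine hull E \<subseteq> E" using x mem_rel_interior_ball by blast
  define h where "h = (y0 - x) + (c / (a \<bullet> a)) *\<^sub>R a"
  have ha: "a \<bullet> h = 0" using aa by (simp add: h_def inner_add_right inner_diff_right ax c_def)
  define A where "A = (a \<bullet> a) / c"
  have A: "A > 0" using aa c by (simp add: A_def)
  define \<delta> where "\<delta> = min (1 / (2*A)) (r / (2 * A * (norm h + 1)))"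
  have hp: "norm h + 1 > 0" by (smt (verit) norm_ge_zero)
  have \<delta>: "\<delta> > 0" using A r hp by (simp add: \<delta>_def)
  show ?thesis
  proof (rule eventually_at_rightI[OF _ \<delta>])
    fix t assume t: "t \<in> {0<..<\<delta>}"
    define l where "l = t * A"
    have l0: "0 < l" using t A by (simp add: l_def)
    have "t < 1 / (2*A)" using t by (simp add: \<delta>_def)
    then have l1: "l < 1/2" using A by (simp add: l_def field_simps)
    have "t < r / (2 * A * (norm h + 1))" using t by (simp add: \<delta>_def)
    moreover have D: "2 * A * (norm h + 1) > 0" using A hp by simp
    ultimately have "t * (2 * A * (norm h + 1)) < r" by (simp add: pos_less_divide_eq)
    then have lh: "2 * l * (norm h + 1) < r" by (simp add: l_def algebra_simps)
    define x' where "x' = x - (l / (1 - l)) *\<^sub>R h"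
    have "a \<bullet> x' = b" by (simp add: x'_def inner_diff_right ha ax)
    then have x'H: "x' \<in> affine hull E" using hE by auto
    have "norm ((l / (1 - l)) *\<^sub>R h) = (l / (1 - l)) * norm h" using l0 l1 by simp
    also have "\<dots> \<le> 2 * l * norm h"
    proof -
      have "l / (1 - l) \<le> 2 * l" using l0 l1 by (simp add: field_simps)
      then show ?thesis by (rule mult_right_mono) simp
    qed
    also have "\<dots> < r"
    proof -
      have "2 * l * (norm h + 1) = 2 * l * norm h + 2 * l" by (simp add: algebra_simps)
      then show ?thesis using lh l0 by linarith
    qed
    finally have "dist x x' < r" by (simp add: x'_def dist_norm)
    then have "x' \<in> E" using r x'H by auto
    then have x'K: "x' \<in> closure K" using EK closure_subset by auto
    have "a \<bullet> y0 \<noteq> a \<bullet> x'" using \<open>a \<bullet> y0 < b\<close> \<open>a \<bullet> x' = b\<close> by simp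
    then have ne: "y0 \<noteq> x'" by auto
    have lc: "l * (c / (a \<bullet> a)) = t" using aa c by (simp add: l_def A_def)
    have s: "(1 - l) *\<^sub>R x' = (1 - l) *\<^sub>R x - l *\<^sub>R h"
      using l1 by (simp add: x'_def scaleR_diff_right)
    have eqp: "x - t *\<^sub>R a = (1 - (1 - l)) *\<^sub>R y0 + (1 - l) *\<^sub>R x'"
      unfolding s by (simp add: h_def algebra_simps lc[symmetric])
    have "x - t *\<^sub>R a \<in> open_segment y0 x'"
      unfolding in_segment(2) using ne l0 l1 eqp by (intro conjI exI[of _ "1 - l"]) auto
    then show "x - t *\<^sub>R a \<in> interior K"
      using in_interior_closure_convex_segment[OF cK y0 x'K] by blast
  qed
qed

lemma perp_parallel:
  fixes E :: "'d::finite pt set"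
  assumes hE: "affine hull E = {y. a \<bullet> y = b}" and a0: "a \<noteq> 0" and ne: "E \<noteq> {}"
    and perp: "\<forall>y\<in>E. \<forall>z\<in>E. u \<bullet> (y - z) = 0"
  shows "u = ((u \<bullet> a) / (a \<bullet> a)) *\<^sub>R a"
proof -
  obtain e where e: "e \<in> E" using ne by auto
  have "E \<subseteq> {y. u \<bullet> y = u \<bullet> e}"
  proof
    fix y assume "y \<in> E"
    then have "u \<bullet> (y - e) = 0" using perp e by blast
    then show "y \<in> {y. u \<bullet> y = u \<bullet> e}" by (simp add: inner_diff_right)
  qed
  then have hs: "affine hull E \<subseteq> {y. u \<bullet> y = u \<bullet> e}" by (rule hull_minimal) (rule affine_hyperplane)
  define c where "c = (u \<bullet> a) / (a \<bullet> a)"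
  define v where "v = u - c *\<^sub>R a"
  have aa: "a \<bullet> a > 0" using a0 by simp
  have "a \<bullet> v = a \<bullet> u - c * (a \<bullet> a)" by (simp only: v_def inner_diff_right inner_scaleR_right)
  also have "\<dots> = 0" using aa by (simp add: c_def inner_commute[of a u])
  finally have av: "a \<bullet> v = 0" .
  have ae: "a \<bullet> e = b" using hull_inc[OF e, of affine] hE by auto
  have "a \<bullet> (e + v) = b" using ae av by (simp add: inner_add_right)
  then have "e + v \<in> affine hull E" using hE by simp
  then have "u \<bullet> (e + v) = u \<bullet> e" using hs by auto
  then have uv: "u \<bullet> v = 0" by (simp add: inner_add_right)
  have "v \<bullet> v = u \<bullet> v - c * (a \<bullet> v)" by (subst (1) v_def) (simp only: inner_diff_left inner_scaleR_left)
  also have "\<dots> = 0" using uv av by simp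
  finally have "v = 0" by simp
  then show ?thesis by (simp add: v_def c_def)
qed

lemma cp_affine_orth:
  fixes H :: "'d::finite pt set"
  assumes "affine H" "closed H" "H \<noteq> {}" "y \<in> H" "z \<in> H"
  shows "(x - closest_point H x) \<bullet> (y - z) = 0"
proof -
  define p where "p = closest_point H x"
  have pH: "p \<in> H" unfolding p_def by (rule closest_point_in_set[OF assms(2,3)])
  have cv: "convex H" using assms(1) by (rule affine_imp_convex)
  have key: "(x - p) \<bullet> (w - p) = 0" if w: "w \<in> H" for w
  proof -
    have "(x - p) \<bullet> (w - p) \<le> 0" unfolding p_def by (rule closest_point_dot[OF cv assms(2) w])
    moreover have w2: "p + 1 *\<^sub>R (p - w) \<in> H" by (rule mem_affine_3_minus[OF assms(1) pH pH w])
    have "(x - p) \<bullet> ((p + 1 *\<^sub>R (p - w)) - p) \<le> 0"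
      unfolding p_def by (rule closest_point_dot[OF cv assms(2) w2[unfolded p_def]])
    then have "(x - p) \<bullet> (w - p) \<ge> 0" by (simp add: inner_diff_right)
    ultimately show ?thesis by simp
  qed
  have "(x - p) \<bullet> (y - z) = (x - p) \<bullet> (y - p) - (x - p) \<bullet> (z - p)"
    by (simp add: inner_diff_right)
  then show ?thesis using key[OF assms(4)] key[OF assms(5)] by (simp add: p_def)
qed

lemma negligible_cp_preimage:
  fixes F :: "'d::finite pt set" and N :: "'d pt"
  assumes H: "H = {y. N \<bullet> y = c}" and N0: "N \<noteq> 0" and FH: "F \<subseteq> H"
    and ad: "aff_dim F < int CARD('d) - 1"
  shows "negligible {x. closest_point H x \<in> F}"
proof (cases "F = {}")
  case True then show ?thesis by simp
next
  case False
  then obtain f0 where f0: "f0 \<in> F" by auto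
  have aH: "affine H" using H affine_hyperplane by simp
  have cH: "closed H" using H closed_hyperplane by simp
  have neH: "H \<noteq> {}" using f0 FH by auto
  have hH: "affine hull H = {y. N \<bullet> y = c}" using aH H by simp
  have orth: "x - closest_point H x = (((x - closest_point H x) \<bullet> N) / (N \<bullet> N)) *\<^sub>R N" for x
    by (rule perp_parallel[OF hH N0 neH]) (use cp_affine_orth[OF aH cH neH] in blast)
  define T where "T = affine hull (insert (f0 + N) F)"
  have aT: "affine T" by (simp add: T_def)
  have sub: "{x. closest_point H x \<in> F} \<subseteq> T"
  proof
    fix x assume "x \<in> {x. closest_point H x \<in> F}"
    then have px: "closest_point H x \<in> T" by (auto simp: T_def hull_inc)
    define s where "s = ((x - closest_point H x) \<bullet> N) / (N \<bullet> N)"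
    have xs: "x - closest_point H x = s *\<^sub>R N" unfolding s_def by (rule orth)
    have "closest_point H x + s *\<^sub>R ((f0 + N) - f0) \<in> T"
      by (rule mem_affine_3_minus[OF aT px]) (auto simp: T_def hull_inc f0)
    moreover have "closest_point H x + s *\<^sub>R ((f0 + N) - f0) = x"
      by (simp add: xs[symmetric])
    ultimately show "x \<in> T" by simp
  qed
  have "aff_dim T \<le> aff_dim F + 1" by (simp add: T_def aff_dim_insert)
  then have "aff_dim T < int DIM('d pt)" using ad by simp
  then obtain a b where ab: "a \<noteq> 0" "T \<subseteq> {x. a \<bullet> x = b}" by (rule aff_lowdim_subset_hyperplane)
  have "negligible {x. a \<bullet> x = b}" using ab(1) by (intro negligible_hyperplane) simp
  then show ?thesis by (rule negligible_subset) (use sub ab(2) in blast)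
qed




lemma simplex_full_interior:
  fixes K :: "'d::finite pt set"
  assumes "int CARD('d) simplex K"
  shows "interior K \<noteq> {}" "convex K"
proof -
  show cK: "convex K" by (rule convex_simplex[OF assms])
  have "affine hull K = UNIV" using aff_dim_eq_full[of K] aff_dim_simplex[OF assms] by simp
  then have ri: "rel_interior K = interior K" by (rule rel_interior_interior)
  have "K \<noteq> {}"
  proof
    assume "K = {}" then have "aff_dim K = -1" by simp
    then show False using aff_dim_simplex[OF assms] by simp
  qed
  then show "interior K \<noteq> {}" using rel_interior_eq_empty[OF cK] ri by simp
qed

lemma facet_side:
  fixes K E :: "'d::finite pt set"
  assumes K: "int CARD('d) simplex K" and EK: "E face_of K" and adE: "aff_dim E = int CARD('d) - 1"
    and neE: "E \<noteq> {}"
  shows "\<exists>N c. norm N = 1 \<and> K \<subseteq> {y. N \<bullet> y \<le> c} \<and> E \<subseteq> K \<and> affine hull E = {y. N \<bullet> y = c}"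
proof -
  have "polyhedron K" by (rule simplex_imp_polyhedron[OF K])
  then have "E exposed_face_of K" using EK exposed_face_of_polyhedron by blast
  then obtain a b where ab: "K \<subseteq> {x. a \<bullet> x \<le> b}" "E = K \<inter> {x. a \<bullet> x = b}"
    unfolding exposed_face_of_def by blast
  have a0: "a \<noteq> 0"
  proof
    assume a: "a = 0"
    then have "E = K \<inter> {x. 0 = b}" using ab(2) by simp
    then have "E = K" using neE by (cases "b = 0") auto
    then show False using adE aff_dim_simplex[OF K] by simp
  qed
  define N where "N = (1 / norm a) *\<^sub>R a"
  define c where "c = b / norm a"
  have na: "norm a > 0" using a0 by simp
  have N1: "norm N = 1" using a0 by (simp add: N_def)
  have Ny: "N \<bullet> y = (a \<bullet> y) / norm a" for y by (simp add: N_def)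
  have "K \<subseteq> {y. N \<bullet> y \<le> c}"
    using ab(1) na by (auto simp: Ny c_def divide_right_mono)
  moreover have EH: "E \<subseteq> {y. N \<bullet> y = c}" using ab(2) by (auto simp: Ny c_def)
  moreover have "affine hull E = {y. N \<bullet> y = c}"
  proof -
    have sub: "affine hull E \<subseteq> {y. N \<bullet> y = c}" using EH by (rule hull_minimal) (rule affine_hyperplane)
    have N0: "N \<noteq> 0" using N1 by auto
    have "aff_dim (affine hull E) = aff_dim {y. N \<bullet> y = c}"
      using adE aff_dim_hyperplane[OF N0, of c] by simp
    then have "affine hull (affine hull E) = affine hull {y. N \<bullet> y = c}"
      using aff_dim_eq_full_gen[OF sub] by simp
    then show ?thesis by (simp add: affine_hyperplane)
  qed
  moreover have "E \<subseteq> K" using ab(2) by auto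
  ultimately show ?thesis using N1 by blast
qed

lemma unit_parallel:
  fixes u N :: "'d::finite pt"
  assumes "norm u = 1" "norm N = 1" "u = ((u \<bullet> N) / (N \<bullet> N)) *\<^sub>R N"
  shows "u = N \<or> u = - N"
proof -
  have NN: "N \<bullet> N = 1" using assms(2) by (simp add: dot_square_norm)
  define s where "s = u \<bullet> N"
  have us: "u = s *\<^sub>R N" using assms(3) NN by (simp add: s_def)
  then have "\<bar>s\<bar> = 1" using assms by simp
  then have "s = 1 \<or> s = -1" by auto
  then show ?thesis using us by auto
qed

lemma Lim_at_right_eq:
  assumes "eventually (\<lambda>t. f t = g t) (at_right (0::real))" "(g \<longlongrightarrow> l) (at_right 0)"
  shows "Lim (at_right 0) f = (l::real)"
  by (rule tendsto_Lim) (use assms tendsto_cong in auto)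

lemma deriv_fwd:
  fixes q :: "'d::finite pt \<Rightarrow> real"
  assumes "((\<lambda>s. q (x + s *\<^sub>R N)) has_field_derivative D) (at 0)"
  shows "((\<lambda>t. (q (x + t *\<^sub>R N) - q x) / t) \<longlongrightarrow> D) (at_right 0)"
proof -
  have "((\<lambda>s. q (x + s *\<^sub>R N)) has_field_derivative D) (at 0 within {0<..})"
    by (rule has_field_derivative_at_within[OF assms])
  then show ?thesis unfolding has_field_derivative_iff by simp
qed

lemma deriv_back:
  fixes q :: "'d::finite pt \<Rightarrow> real"
  assumes "((\<lambda>s. q (x + s *\<^sub>R N)) has_field_derivative D) (at 0)"
  shows "((\<lambda>t. (q x - q (x - t *\<^sub>R N)) / t) \<longlongrightarrow> D) (at_right 0)"
proof -
  have a0: "((\<lambda>s. q (x + s *\<^sub>R N)) has_field_derivative D) (at (- 0))" using assms by simp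
  have "((\<lambda>s. q (x + (- s) *\<^sub>R N)) has_field_derivative D * (- 1)) (at 0)"
    by (rule DERIV_chain2[where g=uminus and x=0, OF a0]) (auto intro!: derivative_eq_intros)
  then have "((\<lambda>s. q (x + (- s) *\<^sub>R N)) has_field_derivative D * (- 1)) (at 0 within {0<..})"
    by (rule has_field_derivative_at_within)
  then have "((\<lambda>t. (q (x - t *\<^sub>R N) - q x) / t) \<longlongrightarrow> - D) (at_right 0)"
    unfolding has_field_derivative_iff by simp
  then have "((\<lambda>t. - ((q (x - t *\<^sub>R N) - q x) / t)) \<longlongrightarrow> - (- D)) (at_right 0)"
    by (rule tendsto_minus)
  then show ?thesis by (simp only: minus_divide_left minus_diff_eq minus_minus)
qed




locale iface_setting =
  fixes C1 C2 :: "('d::finite pt) set set" and \<Gamma> :: "'d pt set" and n :: "'d pt \<Rightarrow> 'd pt"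
  assumes dim: "CARD('d) = 2 \<or> CARD('d) = 3"
    and mesh1: "conforming_mesh C1" and mesh2: "conforming_mesh C2"
    and disj: "mesh_domain C1 \<inter> mesh_domain C2 = {}"
    and cover1: "\<Union>(iface_facets C1 \<Gamma>) = \<Gamma>"
    and cover2: "\<Union>(iface_facets C2 \<Gamma>) = \<Gamma>"
    and normal: "is_iface_normal C1 C2 \<Gamma> n"
begin

lemma normal_piece:
  assumes EE: "(E1, E2) \<in> inter_mesh (iface_facets C1 \<Gamma>) (iface_facets C2 \<Gamma>)"
  shows "\<exists>N K1 K2. K1 \<in> C1 \<and> E1 \<subseteq> K1 \<and> K2 \<in> C2 \<and> E2 \<subseteq> K2 \<and>
     (\<forall>x\<in>rel_interior (E1 \<inter> E2). n x = N \<and> eventually (\<lambda>t. x - t *\<^sub>R N \<in> K1) (at_right 0)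
          \<and> eventually (\<lambda>t. x + t *\<^sub>R N \<in> K2) (at_right 0))"
proof -
  note pp = piece_props[OF mesh1 mesh2 EE]
  have E1: "E1 \<in> iface_facets C1 \<Gamma>" and E2: "E2 \<in> iface_facets C2 \<Gamma>" using pp(1,2) .
  obtain K1 where K1: "K1 \<in> C1" "E1 face_of K1" "int CARD('d) simplex K1"
    using facet_props(1)[OF mesh1 E1] by blast
  obtain K2 where K2: "K2 \<in> C2" "E2 face_of K2" "int CARD('d) simplex K2"
    using facet_props(1)[OF mesh2 E2] by blast
  have neE1: "E1 \<noteq> {}" by (rule facet_props(7)[OF mesh1 E1])
  obtain N1 c1 where S1: "norm N1 = 1" "K1 \<subseteq> {y. N1 \<bullet> y \<le> c1}" "E1 \<subseteq> K1" "affine hull E1 = {y. N1 \<bullet> y = c1}"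
    using facet_side[OF K1(3) K1(2) facet_props(6)[OF mesh1 E1] neE1] by blast
  obtain N2 c2 where S2: "norm N2 = 1" "K2 \<subseteq> {y. N2 \<bullet> y \<le> c2}" "E2 \<subseteq> K2" "affine hull E2 = {y. N2 \<bullet> y = c2}"
    using facet_side[OF K2(3) K2(2) facet_props(6)[OF mesh2 E2] facet_props(7)[OF mesh2 E2]] by blast
  have N10: "N1 \<noteq> 0" using S1(1) by auto
  have N20: "N2 \<noteq> 0" using S2(1) by auto
  have hull_eq: "{y. N2 \<bullet> y = c2} = {y. N1 \<bullet> y = c1}" using pp(4,5) S1(4) S2(4) by simp
  have "\<forall>y\<in>E1. \<forall>z\<in>E1. N2 \<bullet> (y - z) = 0"
  proof (intro ballI)
    fix y z assume "y \<in> E1" "z \<in> E1"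
    then have "y \<in> affine hull E1" "z \<in> affine hull E1" by (auto intro: hull_inc)
    then have "N2 \<bullet> y = c2" "N2 \<bullet> z = c2" using S1(4) hull_eq by auto
    then show "N2 \<bullet> (y - z) = 0" by (simp add: inner_diff_right)
  qed
  then have N2par: "N2 = N1 \<or> N2 = - N1"
    using unit_parallel[OF S2(1) S1(1) perp_parallel[OF S1(4) N10 neE1]] by blast
  have iK1: "interior K1 \<subseteq> mesh_domain C1" unfolding mesh_domain_def using K1(1) by (intro interior_mono) auto
  have iK2: "interior K2 \<subseteq> mesh_domain C2" unfolding mesh_domain_def using K2(1) by (intro interior_mono) auto
  note cK1 = simplex_full_interior[OF K1(3)]
  note cK2 = simplex_full_interior[OF K2(3)]
  have main: "n x = N1 \<and> eventually (\<lambda>t. x - t *\<^sub>R N1 \<in> K1) (at_right 0) \<and> eventually (\<lambda>t. x + t *\<^sub>R N1 \<in> K2) (at_right 0)"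
    if x: "x \<in> rel_interior (E1 \<inter> E2)" for x
  proof -
    have x1: "x \<in> rel_interior E1" using x pp(6) by auto
    have x2: "x \<in> rel_interior E2" using x pp(7) by auto
    have nrm: "norm (n x) = 1" "\<forall>y\<in>E1. \<forall>z\<in>E1. n x \<bullet> (y - z) = 0"
      using normal E1 x1 unfolding is_iface_normal_def by blast+
    have ev3: "eventually (\<lambda>t. x - t *\<^sub>R n x \<in> mesh_domain C1) (at_right 0)"
      using normal E1 x1 unfolding is_iface_normal_def by blast
    have ev4: "eventually (\<lambda>t. x + t *\<^sub>R n x \<in> mesh_domain C2) (at_right 0)"
      using normal E2 x2 unfolding is_iface_normal_def by blast
    have nx: "n x = N1 \<or> n x = - N1"
      using unit_parallel[OF nrm(1) S1(1) perp_parallel[OF S1(4) N10 neE1 nrm(2)]] .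
    have ev1: "eventually (\<lambda>t. x - t *\<^sub>R N1 \<in> interior K1) (at_right 0)"
      by (rule side_interior[OF cK1(2) cK1(1) S1(3) S1(2) S1(4) N10 x1])
    have ev2: "eventually (\<lambda>t. x - t *\<^sub>R N2 \<in> interior K2) (at_right 0)"
      by (rule side_interior[OF cK2(2) cK2(1) S2(3) S2(2) S2(4) N20 x2])
    have nN: "n x = N1"
    proof (rule ccontr)
      assume "n x \<noteq> N1"
      then have m: "n x = - N1" using nx by auto
      have "eventually (\<lambda>t. False) (at_right (0::real))"
        using ev1 ev4
      proof eventually_elim
        case (elim t)
        then have "x - t *\<^sub>R N1 \<in> mesh_domain C1" using iK1 by auto
        moreover have "x - t *\<^sub>R N1 \<in> mesh_domain C2" using elim m by simp
        ultimately show False using disj by auto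
      qed
      then show False by simp
    qed
    have N2m: "N2 = - N1"
    proof (rule ccontr)
      assume "N2 \<noteq> - N1"
      then have m: "N2 = N1" using N2par by auto
      have "eventually (\<lambda>t. False) (at_right (0::real))"
        using ev1 ev2
      proof eventually_elim
        case (elim t)
        then have "x - t *\<^sub>R N1 \<in> mesh_domain C1" using iK1 by auto
        moreover have "x - t *\<^sub>R N1 \<in> mesh_domain C2" using elim m iK2 by auto
        ultimately show False using disj by auto
      qed
      then show False by simp
    qed
    have "eventually (\<lambda>t. x - t *\<^sub>R N1 \<in> K1) (at_right 0)"
      using ev1 by (rule eventually_mono) (use interior_subset in blast)
    moreover have "eventually (\<lambda>t. x + t *\<^sub>R N1 \<in> K2) (at_right 0)"
      using ev2 by (rule eventually_mono) (use interior_subset N2m in auto)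
    ultimately show ?thesis using nN by blast
  qed
  show ?thesis
    by (rule exI[of _ N1], rule exI[of _ K1], rule exI[of _ K2]) (use K1 K2 S1 S2 main in blast)
qed

lemma nderiv_piece1:
  assumes EE: "(E1, E2) \<in> inter_mesh (iface_facets C1 \<Gamma>) (iface_facets C2 \<Gamma>)" and w: "w \<in> Vh p C1 \<Gamma>"
  shows "\<exists>q r. poly_fun p q \<and> poly_fun p r \<and> (\<forall>x\<in>rel_interior (E1 \<inter> E2). w x = q x \<and> nderiv1 n w x = r x)"
proof -
  obtain N K1 K2 where NK: "K1 \<in> C1" "E1 \<subseteq> K1"
    and nx: "\<forall>x\<in>rel_interior (E1 \<inter> E2). n x = N \<and> eventually (\<lambda>t. x - t *\<^sub>R N \<in> K1) (at_right 0)"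
    using normal_piece[OF EE] by blast
  obtain q where q: "poly_fun p q" "\<forall>x\<in>K1. w x = q x" using w NK(1) unfolding Vh_def by blast
  obtain r where r: "poly_fun p r" "\<And>x. ((\<lambda>s. q (x + s *\<^sub>R N)) has_field_derivative r x) (at 0)"
    using poly_fun_deriv[OF q(1), of N] by blast
  have "w x = q x \<and> nderiv1 n w x = r x" if x: "x \<in> rel_interior (E1 \<inter> E2)" for x
  proof -
    have xK: "x \<in> K1" using x rel_interior_subset NK(2) by blast
    have nN: "n x = N" and ev: "eventually (\<lambda>t. x - t *\<^sub>R N \<in> K1) (at_right 0)" using nx x by auto
    have "nderiv1 n w x = r x"
      unfolding nderiv1_def
    proof (rule Lim_at_right_eq)
      show "eventually (\<lambda>t. (w x - w (x - t *\<^sub>R n x)) / t = (q x - q (x - t *\<^sub>R N)) / t) (at_right 0)"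
        using ev by eventually_elim (use xK q(2) nN in auto)
      show "((\<lambda>t. (q x - q (x - t *\<^sub>R N)) / t) \<longlongrightarrow> r x) (at_right 0)" by (rule deriv_back[OF r(2)])
    qed
    then show ?thesis using xK q(2) by auto
  qed
  then show ?thesis using q(1) r(1) by blast
qed

lemma nderiv_piece2:
  assumes EE: "(E1, E2) \<in> inter_mesh (iface_facets C1 \<Gamma>) (iface_facets C2 \<Gamma>)" and w: "w \<in> Vh p C2 \<Gamma>"
  shows "\<exists>q r. poly_fun p q \<and> poly_fun p r \<and> (\<forall>x\<in>rel_interior (E1 \<inter> E2). w x = q x \<and> nderiv2 n w x = r x)"
proof -
  obtain N K1 K2 where NK: "K2 \<in> C2" "E2 \<subseteq> K2"
    and nx: "\<forall>x\<in>rel_interior (E1 \<inter> E2). n x = N \<and> eventually (\<lambda>t. x + t *\<^sub>R N \<in> K2) (at_right 0)"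
    using normal_piece[OF EE] by blast
  obtain q where q: "poly_fun p q" "\<forall>x\<in>K2. w x = q x" using w NK(1) unfolding Vh_def by blast
  obtain r where r: "poly_fun p r" "\<And>x. ((\<lambda>s. q (x + s *\<^sub>R N)) has_field_derivative r x) (at 0)"
    using poly_fun_deriv[OF q(1), of N] by blast
  have "w x = q x \<and> nderiv2 n w x = r x" if x: "x \<in> rel_interior (E1 \<inter> E2)" for x
  proof -
    have xK: "x \<in> K2" using x rel_interior_subset NK(2) by blast
    have nN: "n x = N" and ev: "eventually (\<lambda>t. x + t *\<^sub>R N \<in> K2) (at_right 0)" using nx x by auto
    have "nderiv2 n w x = r x"
      unfolding nderiv2_def
    proof (rule Lim_at_right_eq)
      show "eventually (\<lambda>t. (w (x + t *\<^sub>R n x) - w x) / t = (q (x + t *\<^sub>R N) - q x) / t) (at_right 0)"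
        using ev by eventually_elim (use xK q(2) nN in auto)
      show "((\<lambda>t. (q (x + t *\<^sub>R N) - q x) / t) \<longlongrightarrow> r x) (at_right 0)" by (rule deriv_fwd[OF r(2)])
    qed
    then show ?thesis using xK q(2) by auto
  qed
  then show ?thesis using q(1) r(1) by blast
qed

end




definition slabP :: "'d::finite pt set \<Rightarrow> 'd pt set \<Rightarrow> 'd pt set" where
  "slabP H P = {x. closest_point H x \<in> P \<and> infdist x H \<le> 1/2}"

lemma facet_integral_slab:
  "facet_integral E g = integral (slabP (affine hull E) E) (\<lambda>x. g (closest_point (affine hull E) x))"
  by (simp add: facet_integral_def slabP_def)

lemma integrable_cont_bounded:
  fixes F :: "'d::finite pt \<Rightarrow> real"
  assumes cF: "continuous_on UNIV F" and bS: "bounded S" and mS: "S \<in> sets lebesgue"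
  shows "F integrable_on S"
proof -
  have "compact (closure S)" using bS by simp
  then have "compact (F ` closure S)" by (rule compact_continuous_image[OF continuous_on_subset[OF cF], rotated]) auto
  then have "bounded (F ` closure S)" by (rule compact_imp_bounded)
  then obtain B where B: "\<And>y. y \<in> F ` closure S \<Longrightarrow> norm y \<le> B" unfolding bounded_iff by blast
  have "(\<lambda>x. B) integrable_on S" by (rule integrable_on_const) (rule bounded_set_imp_lmeasurable[OF bS mS])
  moreover have "F \<in> borel_measurable (lebesgue_on S)"
    by (rule continuous_imp_measurable_on_sets_lebesgue[OF continuous_on_subset[OF cF] mS]) auto
  moreover have "\<And>x. x \<in> S \<Longrightarrow> \<bar>F x\<bar> \<le> B" using B closure_subset by force
  ultimately show ?thesis using measurable_bounded_by_integrable_imp_integrable_real[of F S "\<lambda>x. B"] mS by blast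
qed

lemma cp_cont:
  fixes H :: "'d::finite pt set"
  assumes "affine H" "closed H" "H \<noteq> {}"
  shows "continuous (at x) (closest_point H)" "continuous_on S (closest_point H)"
  using continuous_at_closest_point[OF affine_imp_convex[OF assms(1)] assms(2,3)]
    continuous_on_closest_point[OF affine_imp_convex[OF assms(1)] assms(2,3)] by auto

lemma infdist_cp:
  fixes H :: "'d::finite pt set"
  assumes "closed H" "H \<noteq> {}"
  shows "infdist x H = dist x (closest_point H x)"
  by (simp add: infdist_eq_setdist setdist_closest_point[OF assms])

lemma slabP_props:
  fixes H P :: "'d::finite pt set"
  assumes aH: "affine H" and cH: "closed H" and neH: "H \<noteq> {}"
    and oP: "openin (top_of_set H) P" and bP: "bounded P"
  shows "bounded (slabP H P)" "slabP H P \<in> sets lebesgue"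
proof -
  obtain B where B: "\<And>y. y \<in> P \<Longrightarrow> norm y \<le> B" using bP unfolding bounded_iff by blast
  show "bounded (slabP H P)" unfolding bounded_iff
  proof (intro exI ballI)
    fix x assume x: "x \<in> slabP H P"
    then have "dist x (closest_point H x) \<le> 1/2" using infdist_cp[OF cH neH] by (simp add: slabP_def)
    moreover have "norm (closest_point H x) \<le> B" using x B by (simp add: slabP_def)
    moreover have "norm x \<le> norm (closest_point H x) + norm (x - closest_point H x)"
      using norm_triangle_ineq[of "closest_point H x" "x - closest_point H x"] by simp
    ultimately show "norm x \<le> B + 1/2" by (simp add: dist_norm)
  qed
  obtain T where T: "open T" "P = H \<inter> T" using oP unfolding openin_open by blast
  have eq: "slabP H P = (closest_point H -` T) \<inter> {x. infdist x H \<le> 1/2}"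
    using closest_point_in_set[OF cH neH] T(2) by (auto simp: slabP_def)
  have "open (closest_point H -` T)" by (rule continuous_open_vimage[OF T(1)]) (rule cp_cont[OF aH cH neH])
  then have m1: "closest_point H -` T \<in> sets lebesgue" using lebesgue_openin[of UNIV] by simp
  have "closed {x. infdist x H \<le> 1/2}"
    by (rule closed_Collect_le) (simp_all add: continuous_on_infdist[OF continuous_on_id])
  then have m2: "{x. infdist x H \<le> 1/2} \<in> sets lebesgue" using lebesgue_closedin[of UNIV] by simp
  show "slabP H P \<in> sets lebesgue" unfolding eq using m1 m2 by blast
qed

lemma slabP_integrable:
  fixes H P :: "'d::finite pt set" and \<psi> :: "'d pt \<Rightarrow> real"
  assumes aH: "affine H" and cH: "closed H" and neH: "H \<noteq> {}"
    and oP: "openin (top_of_set H) P" and bP: "bounded P" and c\<psi>: "continuous_on UNIV \<psi>"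
  shows "(\<lambda>x. \<psi> (closest_point H x)) integrable_on slabP H P"
proof (rule integrable_cont_bounded[OF _ slabP_props[OF assms(1-5)]])
  show "continuous_on UNIV (\<lambda>x. \<psi> (closest_point H x))"
    by (rule continuous_on_compose2[OF c\<psi> cp_cont(2)[OF aH cH neH]]) auto
qed

lemma slabP_pos:
  fixes H P :: "'d::finite pt set" and \<phi> :: "'d pt \<Rightarrow> real"
  assumes aH: "affine H" and cH: "closed H" and neH: "H \<noteq> {}"
    and oP: "openin (top_of_set H) P" and bP: "bounded P" and c\<phi>: "continuous_on UNIV \<phi>"
    and nn: "\<And>y. \<phi> y \<ge> 0" and z: "integral (slabP H P) (\<lambda>x. \<phi> (closest_point H x)) = 0"
    and y0: "y0 \<in> P"
  shows "\<phi> y0 = 0"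
proof (rule ccontr)
  assume "\<phi> y0 \<noteq> 0"
  then have pos: "\<phi> y0 > 0" using nn[of y0] by simp
  define F where "F = (\<lambda>x. \<phi> (closest_point H x))"
  have cF: "continuous_on UNIV F" unfolding F_def
    by (rule continuous_on_compose2[OF c\<phi> cp_cont(2)[OF aH cH neH]]) auto
  obtain T where T: "open T" "P = H \<inter> T" using oP unfolding openin_open by blast
  have y0H: "y0 \<in> H" using y0 T by auto
  have cy0: "closest_point H y0 = y0" by (rule closest_point_self[OF y0H])
  define Ob where "Ob = (closest_point H -` T) \<inter> {x. infdist x H < 1/2} \<inter> {x. \<phi> y0 / 2 < F x}"
  have "open (closest_point H -` T)" by (rule continuous_open_vimage[OF T(1)]) (rule cp_cont[OF aH cH neH])
  moreover have "open {x. infdist x H < 1/2}" by (rule open_Collect_less) (simp_all add: continuous_on_infdist[OF continuous_on_id])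
  moreover have "open {x. \<phi> y0 / 2 < F x}"
    by (rule open_Collect_less) (simp_all add: cF)
  ultimately have oO: "open Ob" unfolding Ob_def by blast
  have "y0 \<in> Ob" using y0 T cy0 pos y0H by (simp add: Ob_def F_def)
  then obtain e where e: "e > 0" "ball y0 e \<subseteq> Ob" using oO open_contains_ball by blast
  have OS: "Ob \<subseteq> slabP H P" using closest_point_in_set[OF cH neH] T(2) by (auto simp: Ob_def slabP_def)
  have bS: "ball y0 e \<subseteq> slabP H P" using e OS by blast
  have mb: "ball y0 e \<in> sets lebesgue" using lmeasurable_ball by (simp add: fmeasurableD)
  have iB: "F integrable_on ball y0 e" by (rule integrable_cont_bounded[OF cF _ mb]) simp
  have iS: "F integrable_on slabP H P" unfolding F_def by (rule slabP_integrable[OF assms(1-6)])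
  have lm: "ball y0 e \<in> lmeasurable" by simp
  have "integral (ball y0 e) (\<lambda>x. \<phi> y0 / 2) \<le> integral (ball y0 e) F"
    by (rule integral_le[OF integrable_on_const[OF lm] iB]) (use e Ob_def in auto)
  also have "\<dots> \<le> integral (slabP H P) F"
    by (rule integral_subset_le[OF bS iB iS]) (simp add: F_def nn)
  also have "\<dots> = 0" using z by (simp add: F_def)
  finally have le: "integral (ball y0 e) (\<lambda>x. \<phi> y0 / 2) \<le> 0" .
  have "integral (ball y0 e) (\<lambda>x. \<phi> y0 / 2) = integral (ball y0 e) (\<lambda>x. (\<phi> y0 / 2) *\<^sub>R (1::real))" by simp
  also have "\<dots> = (\<phi> y0 / 2) * measure lebesgue (ball y0 e)"
    by (simp only: integral_cmul lmeasure_integral[OF lm]) simp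
  finally have eq: "integral (ball y0 e) (\<lambda>x. \<phi> y0 / 2) = (\<phi> y0 / 2) * measure lebesgue (ball y0 e)" .
  have "\<not> negligible (ball y0 e)" using negligible_convex_interior[of "ball y0 e"] e by simp
  then have "measure lebesgue (ball y0 e) \<noteq> 0" using negligible_iff_measure0[OF lm] by simp
  then have "measure lebesgue (ball y0 e) > 0" using measure_nonneg[of lebesgue "ball y0 e"] by linarith
  then have "(\<phi> y0 / 2) * measure lebesgue (ball y0 e) > 0" using pos by simp
  then show False using le eq by linarith
qed

lemma facet_integral_restrict:
  fixes E H P :: "'d::finite pt set"
  assumes hE: "affine hull E = H" and PE: "P \<subseteq> E" and g0: "\<forall>y\<in>E - P. g y = 0"
  shows "facet_integral E g = integral (slabP H P) (\<lambda>x. g (closest_point H x))"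
proof -
  have "facet_integral E g = integral (slabP H E) (\<lambda>x. if x \<in> slabP H P then g (closest_point H x) else 0)"
    unfolding facet_integral_slab hE
    by (rule integral_cong) (use g0 in \<open>auto simp: slabP_def\<close>)
  also have "\<dots> = integral (slabP H P \<inter> slabP H E) (\<lambda>x. g (closest_point H x))"
    by (rule Henstock_Kurzweil_Integration.integral_restrict_Int)
  also have "slabP H P \<inter> slabP H E = slabP H P" using PE by (auto simp: slabP_def)
  finally show ?thesis .
qed

lemma facet_integral_zero:
  assumes "\<forall>y\<in>E. g y = 0"
  shows "facet_integral E g = 0"
proof -
  have "facet_integral E g = integral (slabP (affine hull E) E) (\<lambda>x. 0)"
    unfolding facet_integral_slab by (rule integral_cong) (use assms in \<open>auto simp: slabP_def\<close>)
  then show ?thesis by simp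
qed




lemma slab_decomp:
  fixes E :: "'d::finite pt set" and G I :: "'d pt set set" and g :: "'d pt \<Rightarrow> real"
  assumes hyp: "affine hull E = {y. N \<bullet> y = c}" and N0: "N \<noteq> 0"
    and finG: "finite G" and cov: "E \<subseteq> \<Union>G" and polyE: "polytope E"
    and polyG: "\<And>E2. E2 \<in> G \<Longrightarrow> polytope E2"
    and adE: "aff_dim E = int CARD('d) - 1"
    and I: "I = {E2 \<in> G. aff_dim (E \<inter> E2) = int CARD('d) - 1}"
    and disjI: "\<And>E2 E2'. E2 \<in> I \<Longrightarrow> E2' \<in> I \<Longrightarrow> E2 \<noteq> E2' \<Longrightarrow>
                   rel_interior (E \<inter> E2) \<inter> rel_interior (E \<inter> E2') = {}"
    and intg: "\<And>E2. E2 \<in> I \<Longrightarrow> (\<lambda>x. g (closest_point (affine hull E) x)) integrable_on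
                   slabP (affine hull E) (rel_interior (E \<inter> E2))"
  shows "facet_integral E g = (\<Sum>E2\<in>I. integral (slabP (affine hull E) (rel_interior (E \<inter> E2)))
                                  (\<lambda>x. g (closest_point (affine hull E) x)))"
proof -
  define H where "H = affine hull E"
  define cp where "cp = closest_point H"
  define f where "f = (\<lambda>x. g (cp x))"
  define S where "S = (\<lambda>E2. slabP H (rel_interior (E \<inter> E2)))"
  have finI: "finite I" using finG I by auto
  have hasI: "(f has_integral (\<Sum>E2\<in>I. integral (S E2) f)) (\<Union>E2\<in>I. S E2)"
  proof (rule has_integral_UN[OF finI])
    show "(f has_integral integral (S E2) f) (S E2)" if "E2 \<in> I" for E2
      using intg[OF that] by (simp add: S_def f_def cp_def H_def has_integral_integral)
    show "pairwise (\<lambda>i i'. negligible (S i \<inter> S i')) I"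
      unfolding pairwise_def
    proof (intro ballI impI)
      fix i i' assume "i \<in> I" "i' \<in> I" "i \<noteq> i'"
      then have "rel_interior (E \<inter> i) \<inter> rel_interior (E \<inter> i') = {}" using disjI by blast
      then have "S i \<inter> S i' = {}" by (auto simp: S_def slabP_def)
      then show "negligible (S i \<inter> S i')" by simp
    qed
  qed
  define FF where "FF = (\<Union>E2\<in>G. {F. F face_of (E \<inter> E2) \<and> aff_dim F < int CARD('d) - 1})"
  have finFF: "finite FF" unfolding FF_def
  proof (intro finite_UN_I finG)
    fix E2 assume "E2 \<in> G"
    then have "finite {F. F face_of (E \<inter> E2)}"
      by (intro finite_polytope_faces polytope_Int polyE polyG)
    then show "finite {F. F face_of (E \<inter> E2) \<and> aff_dim F < int CARD('d) - 1}"
      by (rule finite_subset[rotated]) auto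
  qed
  have negFF: "negligible (\<Union>F\<in>FF. {x. cp x \<in> F})"
  proof (rule negligible_Union)
    show "finite ((\<lambda>F. {x. cp x \<in> F}) ` FF)" using finFF by simp
    show "negligible T" if T: "T \<in> (\<lambda>F. {x. cp x \<in> F}) ` FF" for T
    proof -
      obtain F where F: "F \<in> FF" "T = {x. cp x \<in> F}" using T by blast
      then obtain E2 where E2: "E2 \<in> G" "F face_of (E \<inter> E2)" "aff_dim F < int CARD('d) - 1"
        by (auto simp: FF_def)
      have "F \<subseteq> E" using face_of_imp_subset[OF E2(2)] by blast
      then have "F \<subseteq> {y. N \<bullet> y = c}" using hull_subset[of E affine] hyp by blast
      then have "negligible {x. closest_point {y. N \<bullet> y = c} x \<in> F}"
        by (rule negligible_cp_preimage[OF refl N0 _ E2(3)])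
      then show ?thesis using F(2) by (simp add: cp_def H_def hyp)
    qed
  qed
  have sub: "slabP H E - (\<Union>E2\<in>I. S E2) \<subseteq> (\<Union>F\<in>FF. {x. cp x \<in> F})"
  proof
    fix x assume x: "x \<in> slabP H E - (\<Union>E2\<in>I. S E2)"
    then have yE: "cp x \<in> E" and inf: "infdist x H \<le> 1/2" by (auto simp: slabP_def cp_def)
    obtain E2 where E2: "E2 \<in> G" "cp x \<in> E2" using cov yE by blast
    define X where "X = E \<inter> E2"
    have yX: "cp x \<in> X" using yE E2 by (simp add: X_def)
    have pX: "polytope X" unfolding X_def by (intro polytope_Int polyE polyG E2(1))
    have cX: "convex X" by (rule polytope_imp_convex[OF pX])
    have adX: "aff_dim X \<le> int CARD('d) - 1" using aff_dim_subset[of X E] adE by (auto simp: X_def)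
    show "x \<in> (\<Union>F\<in>FF. {x. cp x \<in> F})"
    proof (cases "E2 \<in> I")
      case True
      then have "x \<notin> S E2" using x by blast
      then have "cp x \<notin> rel_interior X" using inf by (simp add: S_def slabP_def X_def cp_def)
      then have "cp x \<in> rel_frontier X" using yX closure_subset by (auto simp: rel_frontier_def)
      then obtain F where F: "F face_of X" "F \<noteq> X" "cp x \<in> F"
        using rel_frontier_of_polyhedron_alt[OF polytope_imp_polyhedron[OF pX]] by blast
      have "aff_dim F < aff_dim X" by (rule face_of_aff_dim_lt[OF cX F(1,2)])
      then have "F \<in> FF" using F(1) E2(1) adX by (auto simp: FF_def X_def)
      then show ?thesis using F(3) by blast
    next
      case False
      then have "aff_dim X \<noteq> int CARD('d) - 1" using E2(1) I by (auto simp: X_def)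
      then have "aff_dim X < int CARD('d) - 1" using adX by simp
      moreover have "X face_of X" by (rule face_of_refl[OF cX])
      ultimately have "X \<in> FF" using E2(1) by (auto simp: FF_def X_def)
      then show ?thesis using yX by blast
    qed
  qed
  have sub2: "(\<Union>E2\<in>I. S E2) \<subseteq> slabP H E"
    using rel_interior_subset by (fastforce simp: S_def slabP_def)
  have "(f has_integral (\<Sum>E2\<in>I. integral (S E2) f)) (slabP H E)"
  proof (rule has_integral_spike_set_eq[THEN iffD1, OF _ _ hasI])
    have "{x \<in> (\<Union>E2\<in>I. S E2) - slabP H E. f x \<noteq> 0} = {}" using sub2 by blast
    then show "negligible {x \<in> (\<Union>E2\<in>I. S E2) - slabP H E. f x \<noteq> 0}" by (simp only: negligible_empty)
    show "negligible {x \<in> slabP H E - (\<Union>E2\<in>I. S E2). f x \<noteq> 0}"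
      by (rule negligible_subset[OF negFF]) (use sub in blast)
  qed
  then have "integral (slabP H E) f = (\<Sum>E2\<in>I. integral (S E2) f)" by (rule integral_unique)
  then show ?thesis unfolding facet_integral_slab by (simp add: f_def cp_def H_def S_def)
qed




lemma finite_facets:
  fixes C :: "'d::finite pt set set"
  assumes "conforming_mesh C"
  shows "finite (iface_facets C \<Gamma>)"
proof -
  have "iface_facets C \<Gamma> \<subseteq> (\<Union>K\<in>C. {F. F face_of K})" by (auto simp: iface_facets_def)
  moreover have "finite (\<Union>K\<in>C. {F. F face_of K})"
  proof (intro finite_UN_I)
    show "finite C" using assms by (simp add: conforming_mesh_def)
    fix K assume "K \<in> C"
    then have "int CARD('d) simplex K" using assms by (simp add: conforming_mesh_def)
    then show "finite {F. F face_of K}" by (intro finite_polytope_faces simplex_imp_polytope)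
  qed
  ultimately show ?thesis by (rule finite_subset)
qed

lemma diam_pos:
  fixes C :: "'d::finite pt set set"
  assumes mesh: "conforming_mesh C" and E: "E \<in> iface_facets C \<Gamma>" and d2: "CARD('d) \<ge> 2"
  shows "diameter E > 0"
proof -
  have S: "(int CARD('d) - 1) simplex E" by (rule facet_props(2)[OF mesh E])
  then obtain V where V: "finite V" "int (card V) = (int CARD('d) - 1) + 1" "E = convex hull V"
    unfolding simplex by blast
  have cV: "card V \<ge> 2" using V(2) d2 by simp
  then have "V \<noteq> {}" by auto
  then obtain a where a: "a \<in> V" by auto
  have "card (V - {a}) \<ge> 1" using cV a V(1) by simp
  then have "V - {a} \<noteq> {}"
  proof (intro notI)
    assume "V - {a} = {}"
    then have "card (V - {a}) = 0" by (simp only: card.empty)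
    then show False using \<open>card (V - {a}) \<ge> 1\<close> by simp
  qed
  then obtain b where b: "b \<in> V - {a}" by auto
  have abE: "a \<in> E" "b \<in> E" using a b V(3) hull_subset[of V convex] by auto
  have "bounded E" using facet_props(4)[OF mesh E] by (rule compact_imp_bounded)
  then have "dist a b \<le> diameter E" using abE by (rule diameter_bounded_bound)
  moreover have "dist a b > 0" using b by auto
  ultimately show ?thesis by linarith
qed

lemma grad_zero: "grad (\<lambda>x. 0::real) x = 0"
  by (simp add: grad_def vec_eq_iff)

lemma nderiv_zero: "nderiv1 n (\<lambda>x. 0::real) x = 0" "nderiv2 n (\<lambda>x. 0::real) x = 0"
  by (simp_all add: nderiv1_def nderiv2_def tendsto_Lim[OF trivial_limit_at_right_real tendsto_const])

lemma Vh_zero: "(\<lambda>x. 0) \<in> Vh p C \<Gamma>"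
  unfolding Vh_def using poly_fun_const[of p 0] by (auto intro: continuous_on_const)

lemma Qh_zero: "(\<lambda>x. 0) \<in> Qh p G1 G2"
  unfolding Qh_def using poly_fun_const[of p 0] by auto

lemma sum_single:
  assumes "finite A" "a \<in> A" "\<And>b. b \<in> A \<Longrightarrow> b \<noteq> a \<Longrightarrow> f b = 0"
  shows "sum f A = f a"
proof -
  have "sum f A = f a + sum f (A - {a})" by (rule sum.remove[OF assms(1,2)])
  also have "sum f (A - {a}) = 0" by (rule sum.neutral) (use assms(3) in auto)
  finally show ?thesis by simp
qed

context iface_setting
begin

lemma d2: "CARD('d) \<ge> 2" using dim by auto

lemma finF1: "finite (iface_facets C1 \<Gamma>)" by (rule finite_facets[OF mesh1])
lemma finF2: "finite (iface_facets C2 \<Gamma>)" by (rule finite_facets[OF mesh2])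

lemma finIM: "finite (inter_mesh (iface_facets C1 \<Gamma>) (iface_facets C2 \<Gamma>))"
proof -
  have "inter_mesh (iface_facets C1 \<Gamma>) (iface_facets C2 \<Gamma>) \<subseteq> iface_facets C1 \<Gamma> \<times> iface_facets C2 \<Gamma>"
    by (auto simp: inter_mesh_def)
  then show ?thesis by (rule finite_subset) (simp add: finF1 finF2)
qed

lemma piece_disjF1:
  assumes EE: "(E1, E2) \<in> inter_mesh (iface_facets C1 \<Gamma>) (iface_facets C2 \<Gamma>)"
    and E: "E \<in> iface_facets C1 \<Gamma>" and ne: "E \<noteq> E1"
  shows "E \<inter> rel_interior (E1 \<inter> E2) = {}"
proof -
  note pp = piece_props[OF mesh1 mesh2 EE]
  have "E \<inter> rel_interior E1 = {}" by (rule facets_distinct[OF mesh1 pp(1) E ne[symmetric]])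
  then show ?thesis using pp(6) by blast
qed

lemma piece_disjF2:
  assumes EE: "(E1, E2) \<in> inter_mesh (iface_facets C1 \<Gamma>) (iface_facets C2 \<Gamma>)"
    and E: "E \<in> iface_facets C2 \<Gamma>" and ne: "E \<noteq> E2"
  shows "E \<inter> rel_interior (E1 \<inter> E2) = {}"
proof -
  note pp = piece_props[OF mesh1 mesh2 EE]
  have "E \<inter> rel_interior E2 = {}" by (rule facets_distinct[OF mesh2 pp(2) E ne[symmetric]])
  then show ?thesis using pp(7) by blast
qed

lemma piece_disj:
  assumes EE: "(E1, E2) \<in> inter_mesh (iface_facets C1 \<Gamma>) (iface_facets C2 \<Gamma>)"
    and EE': "(E1', E2') \<in> inter_mesh (iface_facets C1 \<Gamma>) (iface_facets C2 \<Gamma>)"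
    and ne: "(E1', E2') \<noteq> (E1, E2)"
  shows "(E1' \<inter> E2') \<inter> rel_interior (E1 \<inter> E2) = {}"
proof (cases "E1' = E1")
  case True
  then have "E2' \<noteq> E2" using ne by auto
  then have "E2' \<inter> rel_interior (E1 \<inter> E2) = {}"
    by (rule piece_disjF2[OF EE piece_props(2)[OF mesh1 mesh2 EE']])
  then show ?thesis by blast
next
  case False
  then have "E1' \<inter> rel_interior (E1 \<inter> E2) = {}"
    by (rule piece_disjF1[OF EE piece_props(1)[OF mesh1 mesh2 EE']])
  then show ?thesis by blast
qed

lemma piece_geom:
  assumes EE: "(E1, E2) \<in> inter_mesh (iface_facets C1 \<Gamma>) (iface_facets C2 \<Gamma>)"
  shows "affine (affine hull E1)" "closed (affine hull E1)" "affine hull E1 \<noteq> {}"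
    "openin (top_of_set (affine hull E1)) (rel_interior (E1 \<inter> E2))"
    "bounded (rel_interior (E1 \<inter> E2))" "rel_interior (E1 \<inter> E2) \<subseteq> E1 \<inter> E2"
    "affine hull (E1 \<inter> E2) = affine hull E1" "affine hull E2 = affine hull E1"
    "\<exists>N c. N \<noteq> 0 \<and> affine hull E1 = {y. N \<bullet> y = c}"
proof -
  note pp = piece_props[OF mesh1 mesh2 EE]
  show "affine (affine hull E1)" by simp
  show "closed (affine hull E1)" by (rule closed_affine_hull)
  show "affine hull E1 \<noteq> {}" using facet_props(7)[OF mesh1 pp(1)] by simp
  show "openin (top_of_set (affine hull E1)) (rel_interior (E1 \<inter> E2))"
    using openin_rel_interior[of "E1 \<inter> E2"] pp(4) by simp
  show "rel_interior (E1 \<inter> E2) \<subseteq> E1 \<inter> E2" by (rule rel_interior_subset)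
  have "bounded E1" using compact_imp_bounded[OF facet_props(4)[OF mesh1 pp(1)]] .
  then show "bounded (rel_interior (E1 \<inter> E2))"
    by (rule bounded_subset) (use \<open>rel_interior (E1 \<inter> E2) \<subseteq> E1 \<inter> E2\<close> in blast)
  show "affine hull (E1 \<inter> E2) = affine hull E1" by (rule pp(4))
  show "affine hull E2 = affine hull E1" using pp(4,5) by simp
  have "aff_dim E1 = DIM('d pt) - 1" using facet_props(6)[OF mesh1 pp(1)] by simp
  then show "\<exists>N c. N \<noteq> 0 \<and> affine hull E1 = {y. N \<bullet> y = c}" by (rule aff_dim_eq_hyperplane[THEN iffD1])
qed

end




lemma alg1:
  fixes al ka kb ha hb sm bt a b ql ra rb G :: real
  assumes an: "al \<noteq> 0" and kan: "ka \<noteq> 0" and kbn: "kb \<noteq> 0" and sm: "sm = kb * ha + ka * hb" and smn: "sm \<noteq> 0"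
    and bt: "bt = inverse al * ka * kb / sm"
    and G: "G = ql - (kb * ha / sm * (ka * ra) + ka * hb / sm * (kb * rb) - bt * (a - b))"
  shows "- ((a - b) * G) - al * (ha / ka * ((ql - ka * ra) * G) + hb / kb * ((ql - kb * rb) * G))
         = (- (al * (ha / ka + hb / kb))) * (G * G)"
proof -
  define c where "c = al * (ha / ka + hb / kb)"
  have cS: "c = al * sm / (ka * kb)" unfolding c_def sm using kan kbn by (simp add: field_simps)
  have e1: "c * (kb * ha / sm * (ka * ra)) = al * ha * ra" unfolding cS using kan kbn smn by (simp add: field_simps)
  have e2: "c * (ka * hb / sm * (kb * rb)) = al * hb * rb" unfolding cS using kan kbn smn by (simp add: field_simps)
  have e3: "c * bt = 1" unfolding cS bt using an kan kbn smn by (simp add: field_simps)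
  have cG: "c * G = c * ql - (c * (kb * ha / sm * (ka * ra)) + c * (ka * hb / sm * (kb * rb)) - (c * bt) * (a - b))"
    unfolding G by (simp add: algebra_simps)
  have br: "- (a - b) - al * (ha / ka * (ql - ka * ra) + hb / kb * (ql - kb * rb)) = - (c * G)"
  proof -
    have "- (a - b) - al * (ha / ka * (ql - ka * ra) + hb / kb * (ql - kb * rb))
        = - (c * ql) + al * ha * ra + al * hb * rb - (a - b)"
      unfolding c_def using kan kbn by (simp add: field_simps)
    also have "\<dots> = - (c * G)" unfolding cG e1 e2 e3 by simp
    finally show ?thesis .
  qed
  have "- ((a - b) * G) - al * (ha / ka * ((ql - ka * ra) * G) + hb / kb * ((ql - kb * rb) * G))
        = (- (a - b) - al * (ha / ka * (ql - ka * ra) + hb / kb * (ql - kb * rb))) * G"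
    by (simp add: algebra_simps)
  also have "\<dots> = (- c) * (G * G)" unfolding br by simp
  finally show ?thesis by (simp add: c_def)
qed

context iface_setting
begin

lemma part1_piece:
  fixes u1 u2 lam f :: "'d pt \<Rightarrow> real" and k1 k2 \<alpha> :: real
  assumes k: "k1 \<ge> k2" "k2 > 0" and alpha: "\<alpha> > 0"
    and u1: "u1 \<in> Vh p C1 \<Gamma>" and u2: "u2 \<in> Vh p C2 \<Gamma>"
    and lam: "lam \<in> Qh p (iface_facets C1 \<Gamma>) (iface_facets C2 \<Gamma>)"
    and disc: "\<forall>\<mu>\<in>Qh p (iface_facets C1 \<Gamma>) (iface_facets C2 \<Gamma>).
                   Bh_form \<alpha> n C1 C2 \<Gamma> k1 k2 u1 u2 lam (\<lambda>x. 0) (\<lambda>x. 0) \<mu> = Lform C1 C2 f (\<lambda>x. 0) (\<lambda>x. 0)"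
    and EE: "(E1, E2) \<in> inter_mesh (iface_facets C1 \<Gamma>) (iface_facets C2 \<Gamma>)"
    and x: "x \<in> rel_interior (E1 \<inter> E2)"
  shows "lam x = flux_avg n k1 k2 (diameter E1) (diameter E2) u1 u2 x
                      - beta_w \<alpha> k1 k2 (diameter E1) (diameter E2) * (u1 x - u2 x)"
proof -
  note pp = piece_props[OF mesh1 mesh2 EE]
  note pg = piece_geom[OF EE]
  define H where "H = affine hull E1"
  define P where "P = rel_interior (E1 \<inter> E2)"
  define cp where "cp = closest_point H"
  define S where "S = slabP H P"
  have aH: "affine H" "closed H" "H \<noteq> {}" using pg(1-3) by (simp_all add: H_def)
  have oP: "openin (top_of_set H) P" and bP: "bounded P" and PE: "P \<subseteq> E1 \<inter> E2"
    using pg(4-6) by (simp_all add: H_def P_def)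
  have hX: "affine hull (E1 \<inter> E2) = H" and hE2: "affine hull E2 = H"
    using pg(7,8) by (simp_all add: H_def)
  have xP: "x \<in> P" using x by (simp add: P_def)
  have cpS: "cp y \<in> P" if "y \<in> S" for y using that by (simp add: S_def slabP_def cp_def)
  obtain ql where ql: "poly_fun p ql" "\<forall>y\<in>P. lam y = ql y"
    using lam EE unfolding Qh_def P_def by fast
  obtain q1 r1 where qr1: "poly_fun p q1" "poly_fun p r1" "\<forall>y\<in>P. u1 y = q1 y \<and> nderiv1 n u1 y = r1 y"
    using nderiv_piece1[OF EE u1] unfolding P_def by blast
  obtain q2 r2 where qr2: "poly_fun p q2" "poly_fun p r2" "\<forall>y\<in>P. u2 y = q2 y \<and> nderiv2 n u2 y = r2 y"
    using nderiv_piece2[OF EE u2] unfolding P_def by blast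
  define h1 where "h1 = diameter E1"
  define h2 where "h2 = diameter E2"
  have h1: "h1 > 0" using diam_pos[OF mesh1 pp(1) d2] by (simp add: h1_def)
  have h2: "h2 > 0" using diam_pos[OF mesh2 pp(2) d2] by (simp add: h2_def)
  have k1: "k1 > 0" using k by simp
  define Sm where "Sm = k2 * h1 + k1 * h2"
  have Sm: "Sm > 0" using h1 h2 k k1 by (simp add: Sm_def add_pos_pos)
  define \<beta> where "\<beta> = beta_w \<alpha> k1 k2 h1 h2"
  have \<beta>: "\<beta> = inverse \<alpha> * k1 * k2 / Sm" by (simp add: \<beta>_def beta_w_def Sm_def)
  define G where "G = (\<lambda>y. ql y - (k2 * h1 / Sm * (k1 * r1 y) + k1 * h2 / Sm * (k2 * r2 y) - \<beta> * (q1 y - q2 y)))"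
  have pG: "poly_fun p G" unfolding G_def
    by (intro poly_fun_diff poly_fun_add poly_fun_scale ql(1) qr1(1,2) qr2(1,2))
  define \<mu> where "\<mu> = (\<lambda>y. if y \<in> P then G y else 0)"
  have vanish: "\<forall>y\<in>E1' \<inter> E2'. \<mu> y = 0"
    if "(E1', E2') \<in> inter_mesh (iface_facets C1 \<Gamma>) (iface_facets C2 \<Gamma>)" "(E1', E2') \<noteq> (E1, E2)" for E1' E2'
    using piece_disj[OF EE that] by (auto simp: \<mu>_def P_def)
  have \<mu>Q': "\<exists>q. poly_fun p q \<and> (\<forall>y\<in>rel_interior (E1' \<inter> E2'). \<mu> y = q y)"
    if EE': "(E1', E2') \<in> inter_mesh (iface_facets C1 \<Gamma>) (iface_facets C2 \<Gamma>)" for E1' E2'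
  proof (cases "(E1', E2') = (E1, E2)")
    case True then show ?thesis using pG by (intro exI[of _ G]) (auto simp: \<mu>_def P_def)
  next
    case False
    then have "\<forall>y\<in>rel_interior (E1' \<inter> E2'). \<mu> y = 0" using vanish[OF EE'] rel_interior_subset by blast
    then show ?thesis using poly_fun_const[of p 0] by blast
  qed
  have \<mu>Q: "\<mu> \<in> Qh p (iface_facets C1 \<Gamma>) (iface_facets C2 \<Gamma>)"
    unfolding Qh_def using \<mu>Q' by auto
  have eq0: "Bh_form \<alpha> n C1 C2 \<Gamma> k1 k2 u1 u2 lam (\<lambda>x. 0) (\<lambda>x. 0) \<mu> = 0"
    using disc \<mu>Q by (simp add: Lform_def)
  define gA where "gA = (\<lambda>y. (u1 y - u2 y) * \<mu> y)"
  have IA: "iface_int (iface_facets C1 \<Gamma>) (iface_facets C2 \<Gamma>) gA = integral S (\<lambda>x. gA (cp x))"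
  proof -
    have "iface_int (iface_facets C1 \<Gamma>) (iface_facets C2 \<Gamma>) gA
        = (case (E1, E2) of (A, B) \<Rightarrow> facet_integral (A \<inter> B) gA)"
      unfolding iface_int_def
    proof (rule sum_single[OF finIM EE])
      fix b assume b: "b \<in> inter_mesh (iface_facets C1 \<Gamma>) (iface_facets C2 \<Gamma>)" "b \<noteq> (E1, E2)"
      obtain A B where AB: "b = (A, B)" by (cases b)
      show "(case b of (A, B) \<Rightarrow> facet_integral (A \<inter> B) gA) = 0"
        unfolding AB using vanish[of A B] b AB by (auto simp: gA_def intro!: facet_integral_zero)
    qed
    also have "\<dots> = integral S (\<lambda>x. gA (cp x))"
      unfolding S_def cp_def
      by (simp, rule facet_integral_restrict[OF hX PE]) (simp add: gA_def \<mu>_def)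
    finally show ?thesis .
  qed
  define gB1 where "gB1 = (\<lambda>y. (lam y - k1 * nderiv1 n u1 y) * \<mu> y)"
  define gB2 where "gB2 = (\<lambda>y. (lam y - k2 * nderiv2 n u2 y) * \<mu> y)"
  have IB1: "(\<Sum>E\<in>iface_facets C1 \<Gamma>. diameter E / k1 * facet_integral E gB1) = h1 / k1 * integral S (\<lambda>x. gB1 (cp x))"
  proof -
    have "(\<Sum>E\<in>iface_facets C1 \<Gamma>. diameter E / k1 * facet_integral E gB1) = diameter E1 / k1 * facet_integral E1 gB1"
    proof (rule sum_single[OF finF1 pp(1)])
      fix E assume E: "E \<in> iface_facets C1 \<Gamma>" "E \<noteq> E1"
      have "\<forall>y\<in>E. gB1 y = 0" using piece_disjF1[OF EE E] by (auto simp: gB1_def \<mu>_def P_def)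
      then show "diameter E / k1 * facet_integral E gB1 = 0" by (simp add: facet_integral_zero)
    qed
    also have "facet_integral E1 gB1 = integral S (\<lambda>x. gB1 (cp x))"
      unfolding S_def cp_def
      by (rule facet_integral_restrict) (use PE in \<open>auto simp: H_def gB1_def \<mu>_def\<close>)
    finally show ?thesis by (simp add: h1_def)
  qed
  have IB2: "(\<Sum>E\<in>iface_facets C2 \<Gamma>. diameter E / k2 * facet_integral E gB2) = h2 / k2 * integral S (\<lambda>x. gB2 (cp x))"
  proof -
    have "(\<Sum>E\<in>iface_facets C2 \<Gamma>. diameter E / k2 * facet_integral E gB2) = diameter E2 / k2 * facet_integral E2 gB2"
    proof (rule sum_single[OF finF2 pp(2)])
      fix E assume E: "E \<in> iface_facets C2 \<Gamma>" "E \<noteq> E2"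
      have "\<forall>y\<in>E. gB2 y = 0" using piece_disjF2[OF EE E] by (auto simp: gB2_def \<mu>_def P_def)
      then show "diameter E / k2 * facet_integral E gB2 = 0" by (simp add: facet_integral_zero)
    qed
    also have "facet_integral E2 gB2 = integral S (\<lambda>x. gB2 (cp x))"
      unfolding S_def cp_def
      by (rule facet_integral_restrict) (use PE hE2 in \<open>auto simp: gB2_def \<mu>_def\<close>)
    finally show ?thesis by (simp add: h2_def)
  qed
  have Bsplit: "Bh_form \<alpha> n C1 C2 \<Gamma> k1 k2 u1 u2 lam (\<lambda>x. 0) (\<lambda>x. 0) \<mu>
     = - integral S (\<lambda>x. gA (cp x)) - \<alpha> * (h1 / k1 * integral S (\<lambda>x. gB1 (cp x)) + h2 / k2 * integral S (\<lambda>x. gB2 (cp x)))"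
  proof -
    have z: "iface_int (iface_facets C1 \<Gamma>) (iface_facets C2 \<Gamma>) (\<lambda>x. (0 - 0) * lam x) = 0"
      by (simp add: iface_int_def facet_integral_def)
    have "Bform C1 C2 \<Gamma> k1 k2 u1 u2 lam (\<lambda>x. 0) (\<lambda>x. 0) \<mu> = - iface_int (iface_facets C1 \<Gamma>) (iface_facets C2 \<Gamma>) gA"
      unfolding Bform_def using z by (simp add: grad_zero gA_def)
    moreover have "Sform n C1 C2 \<Gamma> k1 k2 u1 u2 lam (\<lambda>x. 0) (\<lambda>x. 0) \<mu>
       = (\<Sum>E\<in>iface_facets C1 \<Gamma>. diameter E / k1 * facet_integral E gB1)
       + (\<Sum>E\<in>iface_facets C2 \<Gamma>. diameter E / k2 * facet_integral E gB2)"
      unfolding Sform_def by (simp add: nderiv_zero gB1_def gB2_def)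
    ultimately show ?thesis unfolding Bh_form_def IA IB1 IB2 by simp
  qed
  define \<psi>A where "\<psi>A = (\<lambda>y. (q1 y - q2 y) * G y)"
  define \<psi>B1 where "\<psi>B1 = (\<lambda>y. (ql y - k1 * r1 y) * G y)"
  define \<psi>B2 where "\<psi>B2 = (\<lambda>y. (ql y - k2 * r2 y) * G y)"
  have eA: "integral S (\<lambda>x. gA (cp x)) = integral S (\<lambda>x. \<psi>A (cp x))"
    by (rule integral_cong) (use cpS qr1 qr2 in \<open>simp add: gA_def \<psi>A_def \<mu>_def\<close>)
  have eB1: "integral S (\<lambda>x. gB1 (cp x)) = integral S (\<lambda>x. \<psi>B1 (cp x))"
    by (rule integral_cong) (use cpS qr1 ql in \<open>simp add: gB1_def \<psi>B1_def \<mu>_def\<close>)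
  have eB2: "integral S (\<lambda>x. gB2 (cp x)) = integral S (\<lambda>x. \<psi>B2 (cp x))"
    by (rule integral_cong) (use cpS qr2 ql in \<open>simp add: gB2_def \<psi>B2_def \<mu>_def\<close>)
  have cG: "continuous_on UNIV G" by (rule poly_fun_cont[OF pG])
  have cq: "continuous_on UNIV q1" "continuous_on UNIV q2" "continuous_on UNIV r1" "continuous_on UNIV r2"
    "continuous_on UNIV ql"
    using poly_fun_cont qr1 qr2 ql by blast+
  have iA: "(\<lambda>x. \<psi>A (cp x)) integrable_on S" unfolding S_def cp_def \<psi>A_def
    by (rule slabP_integrable[OF aH oP bP]) (intro continuous_intros cq cG)
  have iB1: "(\<lambda>x. \<psi>B1 (cp x)) integrable_on S" unfolding S_def cp_def \<psi>B1_def
    by (rule slabP_integrable[OF aH oP bP]) (intro continuous_intros cq cG)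
  have iB2: "(\<lambda>x. \<psi>B2 (cp x)) integrable_on S" unfolding S_def cp_def \<psi>B2_def
    by (rule slabP_integrable[OF aH oP bP]) (intro continuous_intros cq cG)
  define c0 where "c0 = - (\<alpha> * (h1 / k1 + h2 / k2))"
  have "h1 / k1 + h2 / k2 > 0" using h1 h2 k k1 by (simp add: add_pos_pos)
  then have c0: "c0 \<noteq> 0" using alpha by (simp add: c0_def)
  have "((\<lambda>x. - \<psi>A (cp x) - \<alpha> * (h1 / k1 * \<psi>B1 (cp x) + h2 / k2 * \<psi>B2 (cp x))) has_integral
        (- integral S (\<lambda>x. \<psi>A (cp x)) - \<alpha> * (h1 / k1 * integral S (\<lambda>x. \<psi>B1 (cp x)) + h2 / k2 * integral S (\<lambda>x. \<psi>B2 (cp x))))) S"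
    by (intro has_integral_diff has_integral_neg has_integral_mult_right has_integral_add
          integrable_integral iA iB1 iB2)
  moreover have "- integral S (\<lambda>x. \<psi>A (cp x)) - \<alpha> * (h1 / k1 * integral S (\<lambda>x. \<psi>B1 (cp x)) + h2 / k2 * integral S (\<lambda>x. \<psi>B2 (cp x))) = 0"
    using eq0 Bsplit eA eB1 eB2 by simp
  moreover have "(\<lambda>x. - \<psi>A (cp x) - \<alpha> * (h1 / k1 * \<psi>B1 (cp x) + h2 / k2 * \<psi>B2 (cp x)))
      = (\<lambda>x. c0 * (G (cp x) * G (cp x)))"
  proof (rule ext)
    fix y
    show "- \<psi>A (cp y) - \<alpha> * (h1 / k1 * \<psi>B1 (cp y) + h2 / k2 * \<psi>B2 (cp y)) = c0 * (G (cp y) * G (cp y))"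
      unfolding \<psi>A_def \<psi>B1_def \<psi>B2_def c0_def
      by (rule alg1[where al=\<alpha> and ka=k1 and kb=k2 and sm=Sm and ha=h1 and hb=h2 and bt=\<beta>
             and a="q1 (cp y)" and b="q2 (cp y)" and ql="ql (cp y)" and ra="r1 (cp y)" and rb="r2 (cp y)"
             and G="G (cp y)"])
        (use alpha k k1 Sm \<beta> in \<open>simp_all add: Sm_def G_def\<close>)
  qed
  ultimately have "((\<lambda>x. c0 * (G (cp x) * G (cp x))) has_integral 0) S" by simp
  then have "((\<lambda>x. inverse c0 * (c0 * (G (cp x) * G (cp x)))) has_integral (inverse c0 * 0)) S"
    by (rule has_integral_mult_right)
  moreover have "(\<lambda>x. inverse c0 * (c0 * (G (cp x) * G (cp x)))) = (\<lambda>x. G (cp x) * G (cp x))"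
  proof (rule ext)
    fix y
    have "inverse c0 * (c0 * (G (cp y) * G (cp y))) = (inverse c0 * c0) * (G (cp y) * G (cp y))"
      by (rule mult.assoc[symmetric])
    also have "inverse c0 * c0 = 1" by (rule left_inverse[OF c0])
    finally show "inverse c0 * (c0 * (G (cp y) * G (cp y))) = G (cp y) * G (cp y)" by simp
  qed
  ultimately have "((\<lambda>x. G (cp x) * G (cp x)) has_integral 0) S" by simp
  then have "integral (slabP H P) (\<lambda>x. (\<lambda>y. G y * G y) (closest_point H x)) = 0"
    by (simp add: integral_unique S_def cp_def)
  then have "(\<lambda>y. G y * G y) x = 0"
    by (intro slabP_pos[where \<phi>="\<lambda>y. G y * G y", OF aH oP bP _ _ _ xP]) (auto intro: continuous_intros cG)
  then have G0: "G x = 0" by simp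
  show ?thesis
    using G0 ql(2) qr1(3) qr2(3) xP
    by (simp add: G_def flux_avg_def \<beta>_def h1_def h2_def Sm_def)
qed

end




definition SPc :: "'d::finite pt set \<Rightarrow> 'd pt set \<Rightarrow> 'd pt set" where
  "SPc E1 E2 = slabP (affine hull E1) (rel_interior (E1 \<inter> E2))"

definition Jc :: "'d::finite pt set \<Rightarrow> 'd pt set \<Rightarrow> ('d pt \<Rightarrow> real) \<Rightarrow> real" where
  "Jc E1 E2 g = integral (SPc E1 E2) (\<lambda>x. g (closest_point (affine hull E1) x))"

definition intg :: "'d::finite pt set \<Rightarrow> 'd pt set \<Rightarrow> ('d pt \<Rightarrow> real) \<Rightarrow> bool" where
  "intg E1 E2 g \<longleftrightarrow> (\<lambda>x. g (closest_point (affine hull E1) x)) integrable_on SPc E1 E2"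

context iface_setting
begin

lemma poly_piece:
  assumes EE: "(E1, E2) \<in> inter_mesh (iface_facets C1 \<Gamma>) (iface_facets C2 \<Gamma>)"
    and c\<psi>: "continuous_on UNIV \<psi>" and eq: "\<forall>y\<in>rel_interior (E1 \<inter> E2). g y = \<psi> y"
  shows "intg E1 E2 g" "Jc E1 E2 g = Jc E1 E2 \<psi>"
proof -
  note pg = piece_geom[OF EE]
  have cpS: "closest_point (affine hull E1) x \<in> rel_interior (E1 \<inter> E2)" if "x \<in> SPc E1 E2" for x
    using that by (simp add: SPc_def slabP_def)
  have i\<psi>: "(\<lambda>x. \<psi> (closest_point (affine hull E1) x)) integrable_on SPc E1 E2"
    unfolding SPc_def by (rule slabP_integrable[OF pg(1-5) c\<psi>])
  show "intg E1 E2 g" unfolding intg_def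
    by (rule integrable_eq[OF i\<psi>]) (use cpS eq in auto)
  show "Jc E1 E2 g = Jc E1 E2 \<psi>" unfolding Jc_def
    by (rule integral_cong) (use cpS eq in auto)
qed

lemma FI_piece:
  assumes EE: "(E1, E2) \<in> inter_mesh (iface_facets C1 \<Gamma>) (iface_facets C2 \<Gamma>)"
    and ig: "intg E1 E2 g"
  shows "facet_integral (E1 \<inter> E2) g = Jc E1 E2 g"
proof -
  note pp = piece_props[OF mesh1 mesh2 EE]
  note pg = piece_geom[OF EE]
  define X where "X = E1 \<inter> E2"
  obtain N c where Nc: "N \<noteq> 0" "affine hull E1 = {y. N \<bullet> y = c}" using pg(9) by blast
  have hX: "affine hull X = affine hull E1" using pg(7) by (simp add: X_def)
  have pX: "polytope X" unfolding X_def
    by (intro polytope_Int facet_props(8)[OF mesh1 pp(1)] facet_props(8)[OF mesh2 pp(2)])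
  have I: "{X} = {E2' \<in> {X}. aff_dim (X \<inter> E2') = int CARD('d) - 1}" using pp(3) by (auto simp: X_def)
  have "facet_integral X g = (\<Sum>E2'\<in>{X}. integral (slabP (affine hull X) (rel_interior (X \<inter> E2')))
                                  (\<lambda>x. g (closest_point (affine hull X) x)))"
  proof (rule slab_decomp[OF _ Nc(1) _ _ pX _ _ I])
    show "affine hull X = {y. N \<bullet> y = c}" using hX Nc(2) by simp
    show "aff_dim X = int CARD('d) - 1" using pp(3) by (simp add: X_def)
    show "(\<lambda>x. g (closest_point (affine hull X) x)) integrable_on slabP (affine hull X) (rel_interior (X \<inter> E2'))"
      if "E2' \<in> {X}" for E2'
      using that ig hX by (simp add: intg_def SPc_def X_def)
  qed (use pX in auto)
  then show ?thesis unfolding X_def using pg(7) by (simp add: Jc_def SPc_def)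
qed

lemma FI_F1:
  assumes E: "E \<in> iface_facets C1 \<Gamma>"
    and ig: "\<And>E2. (E, E2) \<in> inter_mesh (iface_facets C1 \<Gamma>) (iface_facets C2 \<Gamma>) \<Longrightarrow> intg E E2 g"
  shows "facet_integral E g = (\<Sum>pr\<in>{pr \<in> inter_mesh (iface_facets C1 \<Gamma>) (iface_facets C2 \<Gamma>). fst pr = E}.
            Jc (fst pr) (snd pr) g)"
proof -
  define I where "I = {E2 \<in> iface_facets C2 \<Gamma>. aff_dim (E \<inter> E2) = int CARD('d) - 1}"
  have IM: "(E, E2) \<in> inter_mesh (iface_facets C1 \<Gamma>) (iface_facets C2 \<Gamma>) \<longleftrightarrow> E2 \<in> I" for E2
    using E by (auto simp: I_def inter_mesh_def)
  have "aff_dim E = DIM('d pt) - 1" using facet_props(6)[OF mesh1 E] by simp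
  then obtain N c where Nc: "N \<noteq> 0" "affine hull E = {y. N \<bullet> y = c}"
    using aff_dim_eq_hyperplane[THEN iffD1] by blast
  have "facet_integral E g = (\<Sum>E2\<in>I. integral (slabP (affine hull E) (rel_interior (E \<inter> E2)))
                                  (\<lambda>x. g (closest_point (affine hull E) x)))"
  proof (rule slab_decomp[OF Nc(2) Nc(1) finF2 _ facet_props(8)[OF mesh1 E] _ facet_props(6)[OF mesh1 E] I_def])
    show "E \<subseteq> \<Union> (iface_facets C2 \<Gamma>)" using facet_props(3)[OF mesh1 E] cover2 by simp
    show "polytope E2" if "E2 \<in> iface_facets C2 \<Gamma>" for E2 by (rule facet_props(8)[OF mesh2 that])
    show "rel_interior (E \<inter> E2) \<inter> rel_interior (E \<inter> E2') = {}"
      if "E2 \<in> I" "E2' \<in> I" "E2 \<noteq> E2'" for E2 E2'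
    proof -
      have EE: "(E, E2) \<in> inter_mesh (iface_facets C1 \<Gamma>) (iface_facets C2 \<Gamma>)" using IM that(1) by simp
      have E2': "E2' \<in> iface_facets C2 \<Gamma>" using that(2) by (simp add: I_def)
      have "E2' \<inter> rel_interior (E \<inter> E2) = {}" by (rule piece_disjF2[OF EE E2']) (use that in simp)
      then show ?thesis using rel_interior_subset[of "E \<inter> E2'"] by blast
    qed
    show "(\<lambda>x. g (closest_point (affine hull E) x)) integrable_on slabP (affine hull E) (rel_interior (E \<inter> E2))"
      if "E2 \<in> I" for E2
      using ig[of E2] IM[of E2] that by (simp add: intg_def SPc_def)
  qed
  also have "\<dots> = (\<Sum>E2\<in>I. Jc E E2 g)" by (simp add: Jc_def SPc_def)
  also have "\<dots> = (\<Sum>pr\<in>(\<lambda>E2. (E, E2)) ` I. Jc (fst pr) (snd pr) g)"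
    by (subst sum.reindex) (auto simp: inj_on_def)
  also have "(\<lambda>E2. (E, E2)) ` I = {pr \<in> inter_mesh (iface_facets C1 \<Gamma>) (iface_facets C2 \<Gamma>). fst pr = E}"
    using IM by force
  finally show ?thesis .
qed

lemma FI_F2:
  assumes E: "E \<in> iface_facets C2 \<Gamma>"
    and ig: "\<And>E1. (E1, E) \<in> inter_mesh (iface_facets C1 \<Gamma>) (iface_facets C2 \<Gamma>) \<Longrightarrow> intg E1 E g"
  shows "facet_integral E g = (\<Sum>pr\<in>{pr \<in> inter_mesh (iface_facets C1 \<Gamma>) (iface_facets C2 \<Gamma>). snd pr = E}.
            Jc (fst pr) (snd pr) g)"
proof -
  define I where "I = {E1 \<in> iface_facets C1 \<Gamma>. aff_dim (E \<inter> E1) = int CARD('d) - 1}"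
  have IM: "(E1, E) \<in> inter_mesh (iface_facets C1 \<Gamma>) (iface_facets C2 \<Gamma>) \<longleftrightarrow> E1 \<in> I" for E1
    using E by (auto simp: I_def inter_mesh_def Int_commute)
  have "aff_dim E = DIM('d pt) - 1" using facet_props(6)[OF mesh2 E] by simp
  then obtain N c where Nc: "N \<noteq> 0" "affine hull E = {y. N \<bullet> y = c}"
    using aff_dim_eq_hyperplane[THEN iffD1] by blast
  have hull: "affine hull E = affine hull E1" if "E1 \<in> I" for E1
    using piece_geom(8)[of E1 E] IM[of E1] that by simp
  have "facet_integral E g = (\<Sum>E1\<in>I. integral (slabP (affine hull E) (rel_interior (E \<inter> E1)))
                                  (\<lambda>x. g (closest_point (affine hull E) x)))"
  proof (rule slab_decomp[OF Nc(2) Nc(1) finF1 _ facet_props(8)[OF mesh2 E] _ facet_props(6)[OF mesh2 E] I_def])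
    show "E \<subseteq> \<Union> (iface_facets C1 \<Gamma>)" using facet_props(3)[OF mesh2 E] cover1 by simp
    show "polytope E1" if "E1 \<in> iface_facets C1 \<Gamma>" for E1 by (rule facet_props(8)[OF mesh1 that])
    show "rel_interior (E \<inter> E1) \<inter> rel_interior (E \<inter> E1') = {}"
      if "E1 \<in> I" "E1' \<in> I" "E1 \<noteq> E1'" for E1 E1'
    proof -
      have EE: "(E1, E) \<in> inter_mesh (iface_facets C1 \<Gamma>) (iface_facets C2 \<Gamma>)" using IM that(1) by simp
      have E1': "E1' \<in> iface_facets C1 \<Gamma>" using that(2) by (simp add: I_def)
      have "E1' \<inter> rel_interior (E1 \<inter> E) = {}" by (rule piece_disjF1[OF EE E1']) (use that in simp)
      then show ?thesis using rel_interior_subset[of "E \<inter> E1'"] by (auto simp: Int_commute)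
    qed
    show "(\<lambda>x. g (closest_point (affine hull E) x)) integrable_on slabP (affine hull E) (rel_interior (E \<inter> E1))"
      if "E1 \<in> I" for E1
      using ig[of E1] IM[of E1] that hull[OF that] by (simp add: intg_def SPc_def Int_commute)
  qed
  also have "\<dots> = (\<Sum>E1\<in>I. Jc E1 E g)"
    by (rule sum.cong[OF refl]) (simp add: Jc_def SPc_def hull Int_commute)
  also have "\<dots> = (\<Sum>pr\<in>(\<lambda>E1. (E1, E)) ` I. Jc (fst pr) (snd pr) g)"
    by (subst sum.reindex) (auto simp: inj_on_def)
  also have "(\<lambda>E1. (E1, E)) ` I = {pr \<in> inter_mesh (iface_facets C1 \<Gamma>) (iface_facets C2 \<Gamma>). snd pr = E}"
    using IM by force
  finally show ?thesis .
qed

end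




lemma alg2:
  fixes al ka kb ha hb sm bt gm ju jv aa ab ba bb lm :: real
  assumes an: "al \<noteq> 0" and kan: "ka \<noteq> 0" and kbn: "kb \<noteq> 0" and sm: "sm = kb * ha + ka * hb" and smn: "sm \<noteq> 0"
    and bt: "bt = inverse al * ka * kb / sm" and gm: "gm = al * ha * hb / sm"
    and lm: "lm = kb * ha / sm * aa + ka * hb / sm * ab - bt * ju"
  shows "bt * ju * jv - gm * (aa - ab) * (ba - bb) - (kb * ha / sm * aa + ka * hb / sm * ab) * jv
           - ju * (kb * ha / sm * ba + ka * hb / sm * bb)
       = - (jv * lm) - al * (ha / ka * ((lm - aa) * (0 - ba)) + hb / kb * ((lm - ab) * (0 - bb)))"
proof -
  have l1: "lm - aa = ka * hb / sm * (ab - aa) - bt * ju"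
  proof -
    have one: "(kb * ha + ka * hb) / sm = 1" using sm smn by simp
    have "kb * ha / sm * aa + ka * hb / sm * aa = ((kb * ha + ka * hb) / sm) * aa"
      by (simp add: add_divide_distrib distrib_right)
    then have e: "kb * ha / sm * aa + ka * hb / sm * aa = aa" using one by simp
    have "lm - aa = (kb * ha / sm * aa + ka * hb / sm * ab - bt * ju) - (kb * ha / sm * aa + ka * hb / sm * aa)"
      unfolding e lm ..
    also have "\<dots> = ka * hb / sm * (ab - aa) - bt * ju" by (simp add: algebra_simps diff_divide_distrib)
    finally show ?thesis .
  qed
  have l2: "lm - ab = kb * ha / sm * (aa - ab) - bt * ju"
  proof -
    have one: "(kb * ha + ka * hb) / sm = 1" using sm smn by simp
    have "kb * ha / sm * ab + ka * hb / sm * ab = ((kb * ha + ka * hb) / sm) * ab"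
      by (simp add: add_divide_distrib distrib_right)
    then have e: "kb * ha / sm * ab + ka * hb / sm * ab = ab" using one by simp
    have "lm - ab = (kb * ha / sm * aa + ka * hb / sm * ab - bt * ju) - (kb * ha / sm * ab + ka * hb / sm * ab)"
      unfolding e lm ..
    also have "\<dots> = kb * ha / sm * (aa - ab) - bt * ju" by (simp add: algebra_simps diff_divide_distrib)
    finally show ?thesis .
  qed
  have f1: "al * (ha / ka) * (ka * hb / sm) = gm" unfolding gm using kan by (simp add: field_simps)
  have f2: "al * (hb / kb) * (kb * ha / sm) = gm" unfolding gm using kbn by (simp add: field_simps)
  have f3: "al * (ha / ka) * bt = kb * ha / sm" unfolding bt using an kan by (simp add: field_simps)
  have f4: "al * (hb / kb) * bt = ka * hb / sm" unfolding bt using an kbn by (simp add: field_simps)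
  have "al * (ha / ka * ((lm - aa) * (0 - ba)) + hb / kb * ((lm - ab) * (0 - bb)))
      = - ((al * (ha / ka) * (ka * hb / sm)) * (ab - aa) * ba) + (al * (ha / ka) * bt) * ju * ba
        - ((al * (hb / kb) * (kb * ha / sm)) * (aa - ab) * bb) + (al * (hb / kb) * bt) * ju * bb"
  proof -
    have gen: "\<And>A B C D. al * (A * ((C * (ab - aa) - bt * ju) * (0 - ba)) + B * ((D * (aa - ab) - bt * ju) * (0 - bb)))
      = - ((al * A * C) * (ab - aa) * ba) + (al * A * bt) * ju * ba - ((al * B * D) * (aa - ab) * bb) + (al * B * bt) * ju * bb"
      by (simp add: algebra_simps)
    show ?thesis unfolding l1 l2 by (rule gen)
  qed
  also have "\<dots> = - (gm * (ab - aa) * ba) + (kb * ha / sm) * ju * ba - (gm * (aa - ab) * bb) + (ka * hb / sm) * ju * bb"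
    unfolding f1 f2 f3 f4 ..
  finally have e: "al * (ha / ka * ((lm - aa) * (0 - ba)) + hb / kb * ((lm - ab) * (0 - bb)))
      = - (gm * (ab - aa) * ba) + (kb * ha / sm) * ju * ba - (gm * (aa - ab) * bb) + (ka * hb / sm) * ju * bb" .
  have gen2: "\<And>A B. bt * ju * jv - gm * (aa - ab) * (ba - bb) - (A * aa + B * ab) * jv - ju * (A * ba + B * bb)
       = - (jv * (A * aa + B * ab - bt * ju)) - (- (gm * (ab - aa) * ba) + A * ju * ba - (gm * (aa - ab) * bb) + B * ju * bb)"
    by (simp add: algebra_simps)
  have "- (jv * lm) - al * (ha / ka * ((lm - aa) * (0 - ba)) + hb / kb * ((lm - ab) * (0 - bb)))
     = - (jv * lm) - (- (gm * (ab - aa) * ba) + (kb * ha / sm) * ju * ba - (gm * (aa - ab) * bb) + (ka * hb / sm) * ju * bb)"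
    by (simp only: e)
  also have "\<dots> = bt * ju * jv - gm * (aa - ab) * (ba - bb) - (kb * ha / sm * aa + ka * hb / sm * ab) * jv
           - ju * (kb * ha / sm * ba + ka * hb / sm * bb)"
    unfolding lm by (rule gen2[symmetric])
  finally show ?thesis by (rule sym)
qed

context iface_setting
begin

lemma part2_piece:
  fixes u1 u2 lam v1 v2 :: "'d pt \<Rightarrow> real" and k1 k2 \<alpha> :: real
  assumes k: "k1 \<ge> k2" "k2 > 0" and alpha: "\<alpha> > 0"
    and u1: "u1 \<in> Vh p C1 \<Gamma>" and u2: "u2 \<in> Vh p C2 \<Gamma>"
    and v1: "v1 \<in> Vh p C1 \<Gamma>" and v2: "v2 \<in> Vh p C2 \<Gamma>"
    and EE: "(E1, E2) \<in> inter_mesh (iface_facets C1 \<Gamma>) (iface_facets C2 \<Gamma>)"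
    and lamP: "\<forall>x\<in>rel_interior (E1 \<inter> E2). lam x = flux_avg n k1 k2 (diameter E1) (diameter E2) u1 u2 x
                      - beta_w \<alpha> k1 k2 (diameter E1) (diameter E2) * (u1 x - u2 x)"
  defines "h1 \<equiv> diameter E1" and "h2 \<equiv> diameter E2"
  defines "gB \<equiv> \<lambda>x. beta_w \<alpha> k1 k2 h1 h2 * (u1 x - u2 x) * (v1 x - v2 x)"
    and "gG \<equiv> \<lambda>x. gamma_w \<alpha> k1 k2 h1 h2 * flux_jump n k1 k2 u1 u2 x * flux_jump n k1 k2 v1 v2 x"
    and "gA1 \<equiv> \<lambda>x. flux_avg n k1 k2 h1 h2 u1 u2 x * (v1 x - v2 x)"
    and "gA2 \<equiv> \<lambda>x. (u1 x - u2 x) * flux_avg n k1 k2 h1 h2 v1 v2 x"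
    and "gL \<equiv> \<lambda>x. (v1 x - v2 x) * lam x"
    and "gS1 \<equiv> \<lambda>x. (lam x - k1 * nderiv1 n u1 x) * (0 - k1 * nderiv1 n v1 x)"
    and "gS2 \<equiv> \<lambda>x. (lam x - k2 * nderiv2 n u2 x) * (0 - k2 * nderiv2 n v2 x)"
  shows "intg E1 E2 gB \<and> intg E1 E2 gG \<and> intg E1 E2 gA1 \<and> intg E1 E2 gA2 \<and>
         intg E1 E2 gL \<and> intg E1 E2 gS1 \<and> intg E1 E2 gS2 \<and>
         Jc E1 E2 gB - Jc E1 E2 gG - Jc E1 E2 gA1 - Jc E1 E2 gA2
           = - Jc E1 E2 gL - \<alpha> * (h1 / k1 * Jc E1 E2 gS1 + h2 / k2 * Jc E1 E2 gS2)"
proof -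
  note pp = piece_props[OF mesh1 mesh2 EE]
  define P where "P = rel_interior (E1 \<inter> E2)"
  obtain q1 r1 where qr1: "poly_fun p q1" "poly_fun p r1" "\<forall>y\<in>P. u1 y = q1 y \<and> nderiv1 n u1 y = r1 y"
    using nderiv_piece1[OF EE u1] unfolding P_def by blast
  obtain q2 r2 where qr2: "poly_fun p q2" "poly_fun p r2" "\<forall>y\<in>P. u2 y = q2 y \<and> nderiv2 n u2 y = r2 y"
    using nderiv_piece2[OF EE u2] unfolding P_def by blast
  obtain s1 t1 where st1: "poly_fun p s1" "poly_fun p t1" "\<forall>y\<in>P. v1 y = s1 y \<and> nderiv1 n v1 y = t1 y"
    using nderiv_piece1[OF EE v1] unfolding P_def by blast
  obtain s2 t2 where st2: "poly_fun p s2" "poly_fun p t2" "\<forall>y\<in>P. v2 y = s2 y \<and> nderiv2 n v2 y = t2 y"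
    using nderiv_piece2[OF EE v2] unfolding P_def by blast
  have cc: "continuous_on UNIV q1" "continuous_on UNIV r1" "continuous_on UNIV q2" "continuous_on UNIV r2"
    "continuous_on UNIV s1" "continuous_on UNIV t1" "continuous_on UNIV s2" "continuous_on UNIV t2"
    using poly_fun_cont qr1 qr2 st1 st2 by blast+
  have h1: "h1 > 0" using diam_pos[OF mesh1 pp(1) d2] by (simp add: h1_def)
  have h2: "h2 > 0" using diam_pos[OF mesh2 pp(2) d2] by (simp add: h2_def)
  have k1: "k1 > 0" using k by simp
  define Sm where "Sm = k2 * h1 + k1 * h2"
  have Sm: "Sm > 0" using h1 h2 k k1 by (simp add: Sm_def add_pos_pos)
  define \<beta> where "\<beta> = beta_w \<alpha> k1 k2 h1 h2"
  define \<gamma> where "\<gamma> = gamma_w \<alpha> k1 k2 h1 h2"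
  define \<Lambda> where "\<Lambda> = (\<lambda>y. k2 * h1 / Sm * (k1 * r1 y) + k1 * h2 / Sm * (k2 * r2 y) - \<beta> * (q1 y - q2 y))"
  have lamP': "\<forall>y\<in>P. lam y = \<Lambda> y"
    using lamP qr1(3) qr2(3) by (simp add: P_def \<Lambda>_def flux_avg_def Sm_def \<beta>_def h1_def h2_def)
  define \<psi>B where "\<psi>B = (\<lambda>y. \<beta> * (q1 y - q2 y) * (s1 y - s2 y))"
  define \<psi>G where "\<psi>G = (\<lambda>y. \<gamma> * (k1 * r1 y - k2 * r2 y) * (k1 * t1 y - k2 * t2 y))"
  define \<psi>A1 where "\<psi>A1 = (\<lambda>y. (k2 * h1 / Sm * (k1 * r1 y) + k1 * h2 / Sm * (k2 * r2 y)) * (s1 y - s2 y))"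
  define \<psi>A2 where "\<psi>A2 = (\<lambda>y. (q1 y - q2 y) * (k2 * h1 / Sm * (k1 * t1 y) + k1 * h2 / Sm * (k2 * t2 y)))"
  define \<psi>L where "\<psi>L = (\<lambda>y. (s1 y - s2 y) * \<Lambda> y)"
  define \<psi>S1 where "\<psi>S1 = (\<lambda>y. (\<Lambda> y - k1 * r1 y) * (0 - k1 * t1 y))"
  define \<psi>S2 where "\<psi>S2 = (\<lambda>y. (\<Lambda> y - k2 * r2 y) * (0 - k2 * t2 y))"
  have cB: "continuous_on UNIV \<psi>B" unfolding \<psi>B_def by (intro continuous_intros cc)
  have cG: "continuous_on UNIV \<psi>G" unfolding \<psi>G_def by (intro continuous_intros cc)
  have cA1: "continuous_on UNIV \<psi>A1" unfolding \<psi>A1_def by (intro continuous_intros cc)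
  have cA2: "continuous_on UNIV \<psi>A2" unfolding \<psi>A2_def by (intro continuous_intros cc)
  have c\<Lambda>: "continuous_on UNIV \<Lambda>" unfolding \<Lambda>_def by (intro continuous_intros cc)
  have cL: "continuous_on UNIV \<psi>L" unfolding \<psi>L_def by (intro continuous_intros cc c\<Lambda>)
  have cS1: "continuous_on UNIV \<psi>S1" unfolding \<psi>S1_def by (intro continuous_intros cc c\<Lambda>)
  have cS2: "continuous_on UNIV \<psi>S2" unfolding \<psi>S2_def by (intro continuous_intros cc c\<Lambda>)
  have eB: "\<forall>y\<in>P. gB y = \<psi>B y" using qr1(3) qr2(3) st1(3) st2(3) by (simp add: gB_def \<psi>B_def \<beta>_def)
  have eG: "\<forall>y\<in>P. gG y = \<psi>G y" using qr1(3) qr2(3) st1(3) st2(3)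
    by (simp add: gG_def \<psi>G_def \<gamma>_def flux_jump_def)
  have eA1: "\<forall>y\<in>P. gA1 y = \<psi>A1 y" using qr1(3) qr2(3) st1(3) st2(3)
    by (simp add: gA1_def \<psi>A1_def flux_avg_def Sm_def)
  have eA2: "\<forall>y\<in>P. gA2 y = \<psi>A2 y" using qr1(3) qr2(3) st1(3) st2(3)
    by (simp add: gA2_def \<psi>A2_def flux_avg_def Sm_def)
  have eL: "\<forall>y\<in>P. gL y = \<psi>L y" using lamP' st1(3) st2(3) by (simp add: gL_def \<psi>L_def)
  have eS1: "\<forall>y\<in>P. gS1 y = \<psi>S1 y" using lamP' qr1(3) st1(3) by (simp add: gS1_def \<psi>S1_def)
  have eS2: "\<forall>y\<in>P. gS2 y = \<psi>S2 y" using lamP' qr2(3) st2(3) by (simp add: gS2_def \<psi>S2_def)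
  note PB = poly_piece[OF EE cB eB[unfolded P_def]]
  note PG = poly_piece[OF EE cG eG[unfolded P_def]]
  note PA1 = poly_piece[OF EE cA1 eA1[unfolded P_def]]
  note PA2 = poly_piece[OF EE cA2 eA2[unfolded P_def]]
  note PL = poly_piece[OF EE cL eL[unfolded P_def]]
  note PS1 = poly_piece[OF EE cS1 eS1[unfolded P_def]]
  note PS2 = poly_piece[OF EE cS2 eS2[unfolded P_def]]
  have self: "intg E1 E2 \<psi>" if "continuous_on UNIV \<psi>" for \<psi>
    using poly_piece(1)[OF EE that, of \<psi>] by simp
  define cp where "cp = closest_point (affine hull E1)"
  define S where "S = SPc E1 E2"
  have hi: "((\<lambda>x. \<psi> (cp x)) has_integral Jc E1 E2 \<psi>) S" if "continuous_on UNIV \<psi>" for \<psi>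
    using self[OF that] by (simp add: intg_def Jc_def cp_def S_def has_integral_integral)
  have H1: "((\<lambda>x. \<psi>B (cp x) - \<psi>G (cp x) - \<psi>A1 (cp x) - \<psi>A2 (cp x)) has_integral
     (Jc E1 E2 \<psi>B - Jc E1 E2 \<psi>G - Jc E1 E2 \<psi>A1 - Jc E1 E2 \<psi>A2)) S"
    by (intro has_integral_diff hi cB cG cA1 cA2)
  have H2: "((\<lambda>x. - \<psi>L (cp x) - \<alpha> * (h1 / k1 * \<psi>S1 (cp x) + h2 / k2 * \<psi>S2 (cp x))) has_integral
     (- Jc E1 E2 \<psi>L - \<alpha> * (h1 / k1 * Jc E1 E2 \<psi>S1 + h2 / k2 * Jc E1 E2 \<psi>S2))) S"
    by (intro has_integral_diff has_integral_neg has_integral_mult_right has_integral_add hi cL cS1 cS2)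
  have pw: "\<psi>B y - \<psi>G y - \<psi>A1 y - \<psi>A2 y = - \<psi>L y - \<alpha> * (h1 / k1 * \<psi>S1 y + h2 / k2 * \<psi>S2 y)" for y
    unfolding \<psi>B_def \<psi>G_def \<psi>A1_def \<psi>A2_def \<psi>L_def \<psi>S1_def \<psi>S2_def
    by (rule alg2[where al=\<alpha> and ka=k1 and kb=k2 and ha=h1 and hb=h2 and sm=Sm and bt=\<beta> and gm=\<gamma>
          and ju="q1 y - q2 y" and jv="s1 y - s2 y" and aa="k1 * r1 y" and ab="k2 * r2 y"
          and ba="k1 * t1 y" and bb="k2 * t2 y" and lm="\<Lambda> y"])
       (use alpha k k1 Sm in \<open>simp_all add: Sm_def \<beta>_def \<gamma>_def beta_w_def gamma_w_def \<Lambda>_def\<close>)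
  have "Jc E1 E2 \<psi>B - Jc E1 E2 \<psi>G - Jc E1 E2 \<psi>A1 - Jc E1 E2 \<psi>A2
        = - Jc E1 E2 \<psi>L - \<alpha> * (h1 / k1 * Jc E1 E2 \<psi>S1 + h2 / k2 * Jc E1 E2 \<psi>S2)"
    using has_integral_unique[OF H1 H2[folded pw]] .
  then show ?thesis using PB PG PA1 PA2 PL PS1 PS2 by simp
qed

end




context iface_setting
begin

lemma part2:
  fixes u1 u2 lam v1 v2 f :: "'d pt \<Rightarrow> real" and k1 k2 \<alpha> :: real
  assumes k: "k1 \<ge> k2" "k2 > 0" and alpha: "\<alpha> > 0"
    and u1: "u1 \<in> Vh p C1 \<Gamma>" and u2: "u2 \<in> Vh p C2 \<Gamma>"
    and v1: "v1 \<in> Vh p C1 \<Gamma>" and v2: "v2 \<in> Vh p C2 \<Gamma>"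
    and lamP: "\<And>E1 E2. (E1, E2) \<in> inter_mesh (iface_facets C1 \<Gamma>) (iface_facets C2 \<Gamma>) \<Longrightarrow>
         \<forall>x\<in>rel_interior (E1 \<inter> E2). lam x = flux_avg n k1 k2 (diameter E1) (diameter E2) u1 u2 x
                      - beta_w \<alpha> k1 k2 (diameter E1) (diameter E2) * (u1 x - u2 x)"
    and disc: "Bh_form \<alpha> n C1 C2 \<Gamma> k1 k2 u1 u2 lam v1 v2 (\<lambda>x. 0) = Lform C1 C2 f v1 v2"
  shows "ah_form \<alpha> n C1 C2 \<Gamma> k1 k2 u1 u2 v1 v2 = Lform C1 C2 f v1 v2"
proof -
  define IM where "IM = inter_mesh (iface_facets C1 \<Gamma>) (iface_facets C2 \<Gamma>)"
  define gL where "gL = (\<lambda>x. (v1 x - v2 x) * lam x)"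
  define gS1 where "gS1 = (\<lambda>x. (lam x - k1 * nderiv1 n u1 x) * (0 - k1 * nderiv1 n v1 x))"
  define gS2 where "gS2 = (\<lambda>x. (lam x - k2 * nderiv2 n u2 x) * (0 - k2 * nderiv2 n v2 x))"
  define J where "J = (\<lambda>(pr :: 'd pt set \<times> 'd pt set) (g :: 'd pt \<Rightarrow> real). Jc (fst pr) (snd pr) g)"
  have R: "intg E1 E2 (\<lambda>x. beta_w \<alpha> k1 k2 (diameter E1) (diameter E2) * (u1 x - u2 x) * (v1 x - v2 x)) \<and>
         intg E1 E2 (\<lambda>x. gamma_w \<alpha> k1 k2 (diameter E1) (diameter E2) * flux_jump n k1 k2 u1 u2 x * flux_jump n k1 k2 v1 v2 x) \<and>
         intg E1 E2 (\<lambda>x. flux_avg n k1 k2 (diameter E1) (diameter E2) u1 u2 x * (v1 x - v2 x)) \<and>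
         intg E1 E2 (\<lambda>x. (u1 x - u2 x) * flux_avg n k1 k2 (diameter E1) (diameter E2) v1 v2 x) \<and>
         intg E1 E2 gL \<and> intg E1 E2 gS1 \<and> intg E1 E2 gS2 \<and>
         Jc E1 E2 (\<lambda>x. beta_w \<alpha> k1 k2 (diameter E1) (diameter E2) * (u1 x - u2 x) * (v1 x - v2 x))
         - Jc E1 E2 (\<lambda>x. gamma_w \<alpha> k1 k2 (diameter E1) (diameter E2) * flux_jump n k1 k2 u1 u2 x * flux_jump n k1 k2 v1 v2 x)
         - Jc E1 E2 (\<lambda>x. flux_avg n k1 k2 (diameter E1) (diameter E2) u1 u2 x * (v1 x - v2 x))
         - Jc E1 E2 (\<lambda>x. (u1 x - u2 x) * flux_avg n k1 k2 (diameter E1) (diameter E2) v1 v2 x)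
           = - Jc E1 E2 gL - \<alpha> * (diameter E1 / k1 * Jc E1 E2 gS1 + diameter E2 / k2 * Jc E1 E2 gS2)"
    if EE: "(E1, E2) \<in> IM" for E1 E2
    using part2_piece[OF k alpha u1 u2 v1 v2 EE[unfolded IM_def] lamP[OF EE[unfolded IM_def]]]
    unfolding gL_def gS1_def gS2_def by blast
  have bh: "bh_form \<alpha> n C1 C2 \<Gamma> k1 k2 u1 u2 v1 v2
     = (\<Sum>pr\<in>IM. - J pr gL - \<alpha> * (diameter (fst pr) / k1 * J pr gS1 + diameter (snd pr) / k2 * J pr gS2))"
    unfolding bh_form_def IM_def[symmetric]
  proof (rule sum.cong[OF refl])
    fix pr assume pr: "pr \<in> IM"
    obtain E1 E2 where pr_eq: "pr = (E1, E2)" by (cases pr)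
    have EE: "(E1, E2) \<in> IM" using pr pr_eq by simp
    note RR = R[OF EE]
    have FI: "facet_integral (E1 \<inter> E2) g = Jc E1 E2 g" if "intg E1 E2 g" for g
      by (rule FI_piece[OF EE[unfolded IM_def] that])
    show "(case pr of (E1, E2) \<Rightarrow>
          let h1 = diameter E1; h2 = diameter E2; E = E1 \<inter> E2
          in facet_integral E (\<lambda>x. beta_w \<alpha> k1 k2 h1 h2 * (u1 x - u2 x) * (v1 x - v2 x)) -
             facet_integral E (\<lambda>x. gamma_w \<alpha> k1 k2 h1 h2 * flux_jump n k1 k2 u1 u2 x * flux_jump n k1 k2 v1 v2 x) -
             facet_integral E (\<lambda>x. flux_avg n k1 k2 h1 h2 u1 u2 x * (v1 x - v2 x)) -
             facet_integral E (\<lambda>x. (u1 x - u2 x) * flux_avg n k1 k2 h1 h2 v1 v2 x)) =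
         - J pr gL - \<alpha> * (diameter (fst pr) / k1 * J pr gS1 + diameter (snd pr) / k2 * J pr gS2)"
      unfolding pr_eq Let_def prod.case J_def fst_conv snd_conv
      using RR by (simp only: FI)
  qed
  have iL: "iface_int (iface_facets C1 \<Gamma>) (iface_facets C2 \<Gamma>) gL = (\<Sum>pr\<in>IM. J pr gL)"
    unfolding iface_int_def IM_def[symmetric]
  proof (rule sum.cong[OF refl])
    fix pr assume pr: "pr \<in> IM"
    obtain E1 E2 where pr_eq: "pr = (E1, E2)" by (cases pr)
    have EE: "(E1, E2) \<in> IM" using pr pr_eq by simp
    show "(case pr of (E1, E2) \<Rightarrow> facet_integral (E1 \<inter> E2) gL) = J pr gL"
      unfolding pr_eq prod.case J_def fst_conv snd_conv
      by (rule FI_piece[OF EE[unfolded IM_def]]) (use R[OF EE] in blast)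
  qed
  have finIM': "finite IM" using finIM by (simp add: IM_def)
  have s1: "(\<Sum>E\<in>iface_facets C1 \<Gamma>. diameter E / k1 * facet_integral E gS1)
       = (\<Sum>pr\<in>IM. diameter (fst pr) / k1 * J pr gS1)"
  proof -
    have "(\<Sum>E\<in>iface_facets C1 \<Gamma>. diameter E / k1 * facet_integral E gS1)
        = (\<Sum>E\<in>iface_facets C1 \<Gamma>. \<Sum>pr\<in>{pr \<in> IM. fst pr = E}. diameter (fst pr) / k1 * J pr gS1)"
    proof (rule sum.cong[OF refl])
      fix E assume E: "E \<in> iface_facets C1 \<Gamma>"
      have "facet_integral E gS1 = (\<Sum>pr\<in>{pr \<in> IM. fst pr = E}. J pr gS1)"
        unfolding IM_def J_def by (rule FI_F1[OF E]) (use R in \<open>auto simp: IM_def\<close>)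
      then show "diameter E / k1 * facet_integral E gS1 = (\<Sum>pr\<in>{pr \<in> IM. fst pr = E}. diameter (fst pr) / k1 * J pr gS1)"
        by (simp add: sum_distrib_left)
    qed
    also have "\<dots> = (\<Sum>pr\<in>IM. diameter (fst pr) / k1 * J pr gS1)"
      by (rule sum.group[OF finIM' finF1]) (auto simp: IM_def inter_mesh_def)
    finally show ?thesis .
  qed
  have s2: "(\<Sum>E\<in>iface_facets C2 \<Gamma>. diameter E / k2 * facet_integral E gS2)
       = (\<Sum>pr\<in>IM. diameter (snd pr) / k2 * J pr gS2)"
  proof -
    have "(\<Sum>E\<in>iface_facets C2 \<Gamma>. diameter E / k2 * facet_integral E gS2)
        = (\<Sum>E\<in>iface_facets C2 \<Gamma>. \<Sum>pr\<in>{pr \<in> IM. snd pr = E}. diameter (snd pr) / k2 * J pr gS2)"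
    proof (rule sum.cong[OF refl])
      fix E assume E: "E \<in> iface_facets C2 \<Gamma>"
      have "facet_integral E gS2 = (\<Sum>pr\<in>{pr \<in> IM. snd pr = E}. J pr gS2)"
        unfolding IM_def J_def by (rule FI_F2[OF E]) (use R in \<open>auto simp: IM_def\<close>)
      then show "diameter E / k2 * facet_integral E gS2 = (\<Sum>pr\<in>{pr \<in> IM. snd pr = E}. diameter (snd pr) / k2 * J pr gS2)"
        by (simp add: sum_distrib_left)
    qed
    also have "\<dots> = (\<Sum>pr\<in>IM. diameter (snd pr) / k2 * J pr gS2)"
      by (rule sum.group[OF finIM' finF2]) (auto simp: IM_def inter_mesh_def)
    finally show ?thesis .
  qed
  have z: "iface_int (iface_facets C1 \<Gamma>) (iface_facets C2 \<Gamma>) (\<lambda>x. (u1 x - u2 x) * 0) = 0"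
    by (simp add: iface_int_def facet_integral_def)
  have Bh: "Bh_form \<alpha> n C1 C2 \<Gamma> k1 k2 u1 u2 lam v1 v2 (\<lambda>x. 0)
     = k1 * integral (mesh_domain C1) (\<lambda>x. grad u1 x \<bullet> grad v1 x)
     + k2 * integral (mesh_domain C2) (\<lambda>x. grad u2 x \<bullet> grad v2 x)
     - iface_int (iface_facets C1 \<Gamma>) (iface_facets C2 \<Gamma>) gL
     - \<alpha> * ((\<Sum>E\<in>iface_facets C1 \<Gamma>. diameter E / k1 * facet_integral E gS1)
            + (\<Sum>E\<in>iface_facets C2 \<Gamma>. diameter E / k2 * facet_integral E gS2))"
    unfolding Bh_form_def Bform_def Sform_def gL_def gS1_def gS2_def using z by simp
  have "bh_form \<alpha> n C1 C2 \<Gamma> k1 k2 u1 u2 v1 v2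
     = - iface_int (iface_facets C1 \<Gamma>) (iface_facets C2 \<Gamma>) gL
       - \<alpha> * ((\<Sum>E\<in>iface_facets C1 \<Gamma>. diameter E / k1 * facet_integral E gS1)
            + (\<Sum>E\<in>iface_facets C2 \<Gamma>. diameter E / k2 * facet_integral E gS2))"
    unfolding bh iL s1 s2
    by (simp add: sum_subtractf sum_negf sum.distrib sum_distrib_left distrib_left)
  then show ?thesis using disc Bh unfolding ah_form_def by simp
qed

end


theorem mainTheorem6:
  fixes C1 C2 :: "('d::finite pt) set set"
    and \<Gamma> :: "'d pt set"
    and n :: "'d pt \<Rightarrow> 'd pt"
    and f u1 u2 lam :: "'d pt \<Rightarrow> real"
    and k1 k2 \<alpha> :: real and p :: nat
  assumes dim: "CARD('d) = 2 \<or> CARD('d) = 3"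
    and mesh1: "conforming_mesh C1" and mesh2: "conforming_mesh C2"
    and disj: "mesh_domain C1 \<inter> mesh_domain C2 = {}"
    and Gamma_def: "\<Gamma> = frontier (mesh_domain C1) \<inter> frontier (mesh_domain C2)"
    and cover1: "\<Union>(iface_facets C1 \<Gamma>) = \<Gamma>"
    and cover2: "\<Union>(iface_facets C2 \<Gamma>) = \<Gamma>"
    and normal: "is_iface_normal C1 C2 \<Gamma> n"
    and k: "k1 \<ge> k2" "k2 > 0"
    and f_L2: "f measurable_on interior (\<Union>C1 \<union> \<Union>C2)"
              "(\<lambda>x. (f x)\<^sup>2) integrable_on interior (\<Union>C1 \<union> \<Union>C2)"
    and p: "p \<ge> 1"
    and alpha: "\<alpha> > 0"
    and u1: "u1 \<in> Vh p C1 \<Gamma>" and u2: "u2 \<in> Vh p C2 \<Gamma>"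
    and lam: "lam \<in> Qh p (iface_facets C1 \<Gamma>) (iface_facets C2 \<Gamma>)"
    and disc: "\<forall>v1\<in>Vh p C1 \<Gamma>. \<forall>v2\<in>Vh p C2 \<Gamma>.
                 \<forall>\<mu>\<in>Qh p (iface_facets C1 \<Gamma>) (iface_facets C2 \<Gamma>).
                   Bh_form \<alpha> n C1 C2 \<Gamma> k1 k2 u1 u2 lam v1 v2 \<mu> = Lform C1 C2 f v1 v2"
  shows "(\<forall>(E1, E2)\<in>inter_mesh (iface_facets C1 \<Gamma>) (iface_facets C2 \<Gamma>).
            \<forall>x\<in>rel_interior (E1 \<inter> E2).
              lam x = flux_avg n k1 k2 (diameter E1) (diameter E2) u1 u2 x
                      - beta_w \<alpha> k1 k2 (diameter E1) (diameter E2) * (u1 x - u2 x))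
       \<and> (\<forall>v1\<in>Vh p C1 \<Gamma>. \<forall>v2\<in>Vh p C2 \<Gamma>.
            ah_form \<alpha> n C1 C2 \<Gamma> k1 k2 u1 u2 v1 v2 = Lform C1 C2 f v1 v2)"
  proof -
  interpret iface_setting C1 C2 \<Gamma> n
    by unfold_locales (rule dim mesh1 mesh2 disj cover1 cover2 normal)+
  have disc0: "\<forall>\<mu>\<in>Qh p (iface_facets C1 \<Gamma>) (iface_facets C2 \<Gamma>).
      Bh_form \<alpha> n C1 C2 \<Gamma> k1 k2 u1 u2 lam (\<lambda>x. 0) (\<lambda>x. 0) \<mu> = Lform C1 C2 f (\<lambda>x. 0) (\<lambda>x. 0)"
    using disc Vh_zero[of p C1 \<Gamma>] Vh_zero[of p C2 \<Gamma>] by blast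
  have P1: "\<forall>x\<in>rel_interior (E1 \<inter> E2).
              lam x = flux_avg n k1 k2 (diameter E1) (diameter E2) u1 u2 x
                      - beta_w \<alpha> k1 k2 (diameter E1) (diameter E2) * (u1 x - u2 x)"
    if EE: "(E1, E2) \<in> inter_mesh (iface_facets C1 \<Gamma>) (iface_facets C2 \<Gamma>)" for E1 E2
    using part1_piece[OF k alpha u1 u2 lam disc0 EE] by blast
  show ?thesis
  proof
    show "\<forall>(E1, E2)\<in>inter_mesh (iface_facets C1 \<Gamma>) (iface_facets C2 \<Gamma>).
            \<forall>x\<in>rel_interior (E1 \<inter> E2).
              lam x = flux_avg n k1 k2 (diameter E1) (diameter E2) u1 u2 x
                      - beta_w \<alpha> k1 k2 (diameter E1) (diameter E2) * (u1 x - u2 x)"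
      using P1 by blast
    show "\<forall>v1\<in>Vh p C1 \<Gamma>. \<forall>v2\<in>Vh p C2 \<Gamma>.
            ah_form \<alpha> n C1 C2 \<Gamma> k1 k2 u1 u2 v1 v2 = Lform C1 C2 f v1 v2"
    proof (intro ballI)
      fix v1 v2 assume v1: "v1 \<in> Vh p C1 \<Gamma>" and v2: "v2 \<in> Vh p C2 \<Gamma>"
      have "Bh_form \<alpha> n C1 C2 \<Gamma> k1 k2 u1 u2 lam v1 v2 (\<lambda>x. 0) = Lform C1 C2 f v1 v2"
        using disc v1 v2 Qh_zero by blast
      then show "ah_form \<alpha> n C1 C2 \<Gamma> k1 k2 u1 u2 v1 v2 = Lform C1 C2 f v1 v2"
        using part2[OF k alpha u1 u2 v1 v2] P1 by blast
    qed
  qed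
qed

end
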